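(* Let $A$ be a unital $C^*$-algebra, $H$ a Hilbert space, and $\phi\colon A\to B(H)$ a positive linear map with $\phi(1)=1$. Suppose $\phi$ is of the form $\phi(x)=\sum_{i=1}^n\omega_i(x)b_i$ with $\omega_i$ states of $A$ and $b_i\in B(H)^+$. Let $e$ be a projection in the definite set $D_\phi$ of $\phi$ and put $f=1-e$. Then $\phi(e)$ and $\phi(f)$ are projections in $B(H)$ and $$\phi(x)=\phi(exe)+\phi(fxf)=\phi(e)\phi(x)\phi(e)+\phi(f)\phi(x)\phi(f)$$ for all $x\in A$. Hence $\phi(D_\phi)$ is an abelian $C^*$-algebra contained in the center of the von Neumann algebra generated by $\phi(A)$. In particular, if $\phi$ is faithful then $D_\phi$ is an abelian $C^*$-algebra.
   Context: For a positive linear map $\phi\colon A\to B$ of norm at most $1$ between $C^*$-algebras, the (self-adjoint) definite set $D_\phi$ is the set of self-adjoint $a\in A$ with $\phi(a^2)=\phi(a)^2$. $\phi$ is faithful if $\phi(x^*x)=0$ implies $x=0$. *)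

theory Defs
  imports "HOL-Analysis.Analysis"
begin

class complex_vector = real_vector +
  fixes scaleC :: "complex \<Rightarrow> 'a \<Rightarrow> 'a"
  assumes scaleC_add_right: "scaleC a (x + y) = scaleC a x + scaleC a y"
    and scaleC_add_left: "scaleC (a + b) x = scaleC a x + scaleC b x"
    and scaleC_scaleC: "scaleC a (scaleC b x) = scaleC (a * b) x"
    and scaleC_one: "scaleC 1 x = x"
    and scaleR_scaleC: "scaleR r x = scaleC (complex_of_real r) x"

class complex_normed_vector = complex_vector + real_normed_vector +
  assumes norm_scaleC: "norm (scaleC a x) = cmod a * norm x"

class chilbert_space = complex_normed_vector + banach +
  fixes cinner :: "'a \<Rightarrow> 'a \<Rightarrow> complex"
  assumes cinner_add_left: "cinner (x + y) z = cinner x z + cinner y z"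
    and cinner_scaleC_left: "cinner (scaleC c x) y = cnj c * cinner x y"
    and cinner_commute: "cinner y x = cnj (cinner x y)"
    and norm_cinner: "norm x = sqrt (Re (cinner x x))"

class cstar_algebra = complex_normed_vector + real_normed_algebra_1 + banach +
  fixes cstar :: "'a \<Rightarrow> 'a"
  assumes cstar_involutive: "cstar (cstar x) = x"
    and cstar_add: "cstar (x + y) = cstar x + cstar y"
    and cstar_scaleC: "cstar (scaleC c x) = scaleC (cnj c) (cstar x)"
    and cstar_mult: "cstar (x * y) = cstar y * cstar x"
    and cstar_identity: "norm (cstar x * x) = norm x * norm x"
    and scaleC_mult_left: "scaleC c x * y = scaleC c (x * y)"
    and mult_scaleC_right: "x * scaleC c y = scaleC c (x * y)"

definition cstar_positive :: "'a::cstar_algebra \<Rightarrow> bool" where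
  "cstar_positive a \<longleftrightarrow> (\<exists>y. a = cstar y * y)"

definition cstar_projection :: "'a::cstar_algebra \<Rightarrow> bool" where
  "cstar_projection e \<longleftrightarrow> e * e = e \<and> cstar e = e"

definition is_state :: "('a::cstar_algebra \<Rightarrow> complex) \<Rightarrow> bool" where
  "is_state \<omega> \<longleftrightarrow>
     (\<forall>x y. \<omega> (x + y) = \<omega> x + \<omega> y) \<and>
     (\<forall>c x. \<omega> (scaleC c x) = c * \<omega> x) \<and>
     (\<forall>a. cstar_positive a \<longrightarrow> Im (\<omega> a) = 0 \<and> Re (\<omega> a) \<ge> 0) \<and>
     \<omega> 1 = 1"

definition cstar_subalgebra :: "'a::cstar_algebra set \<Rightarrow> bool" where
  "cstar_subalgebra M \<longleftrightarrow>
     0 \<in> M \<and>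
     (\<forall>a\<in>M. \<forall>b\<in>M. a + b \<in> M \<and> a * b \<in> M) \<and>
     (\<forall>c. \<forall>a\<in>M. scaleC c a \<in> M) \<and>
     (\<forall>a\<in>M. cstar a \<in> M) \<and>
     closed M"

definition bounded_op :: "('h::chilbert_space \<Rightarrow> 'h) \<Rightarrow> bool" where
  "bounded_op T \<longleftrightarrow>
     (\<forall>x y. T (x + y) = T x + T y) \<and>
     (\<forall>c x. T (scaleC c x) = scaleC c (T x)) \<and>
     (\<exists>K. \<forall>x. norm (T x) \<le> K * norm x)"

definition op_positive :: "('h::chilbert_space \<Rightarrow> 'h) \<Rightarrow> bool" where
  "op_positive T \<longleftrightarrow> bounded_op T \<and>
     (\<forall>x. Im (cinner x (T x)) = 0 \<and> Re (cinner x (T x)) \<ge> 0)"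

definition op_selfadjoint :: "('h::chilbert_space \<Rightarrow> 'h) \<Rightarrow> bool" where
  "op_selfadjoint T \<longleftrightarrow> bounded_op T \<and> (\<forall>x y. cinner (T x) y = cinner x (T y))"

definition op_projection :: "('h::chilbert_space \<Rightarrow> 'h) \<Rightarrow> bool" where
  "op_projection T \<longleftrightarrow> op_selfadjoint T \<and> T \<circ> T = T"

definition op_cstar_subalgebra :: "('h::chilbert_space \<Rightarrow> 'h) set \<Rightarrow> bool" where
  "op_cstar_subalgebra C \<longleftrightarrow>
     (\<forall>T\<in>C. bounded_op T) \<and>
     (\<lambda>x. 0) \<in> C \<and>
     (\<forall>S\<in>C. \<forall>T\<in>C. (\<lambda>x. S x + T x) \<in> C \<and> S \<circ> T \<in> C) \<and>
     (\<forall>c. \<forall>T\<in>C. (\<lambda>x. scaleC c (T x)) \<in> C) \<and>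
     (\<forall>T\<in>C. \<exists>S\<in>C. \<forall>x y. cinner (T x) y = cinner x (S y)) \<and>
     (\<forall>T Ts. (\<forall>n. Ts n \<in> C) \<and> bounded_op T \<and>
        (\<lambda>n. onorm (\<lambda>x. Ts n x - T x)) \<longlonglongrightarrow> 0 \<longrightarrow> T \<in> C)"

definition commutant :: "('h::chilbert_space \<Rightarrow> 'h) set \<Rightarrow> ('h \<Rightarrow> 'h) set" where
  "commutant S = {T. bounded_op T \<and> (\<forall>X\<in>S. T \<circ> X = X \<circ> T)}"

text \<open>Von Neumann algebra generated by a self-adjoint set containing the identity:
  by the bicommutant theorem it is the double commutant.\<close>
definition vN_generated :: "('h::chilbert_space \<Rightarrow> 'h) set \<Rightarrow> ('h \<Rightarrow> 'h) set" where
  "vN_generated S = commutant (commutant S)"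

definition center :: "('h::chilbert_space \<Rightarrow> 'h) set \<Rightarrow> ('h \<Rightarrow> 'h) set" where
  "center M = M \<inter> commutant M"

definition definite_set :: "('a::cstar_algebra \<Rightarrow> 'h::chilbert_space \<Rightarrow> 'h) \<Rightarrow> 'a set" where
  "definite_set \<phi> = {a. cstar a = a \<and> \<phi> (a * a) = \<phi> a \<circ> \<phi> a}"

definition faithful_map :: "('a::cstar_algebra \<Rightarrow> 'h::chilbert_space \<Rightarrow> 'h) \<Rightarrow> bool" where
  "faithful_map \<phi> \<longleftrightarrow> (\<forall>x. \<phi> (cstar x * x) = (\<lambda>h. 0) \<longrightarrow> x = 0)"

end

theory Submission
  imports Defs "HOL-Computational_Algebra.Formal_Power_Series"
begin


lemma sC_zero_left[simp]: "scaleC 0 (x::'a::complex_vector) = 0"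
proof -
  have "scaleR 0 x = scaleC (complex_of_real 0) x" by (rule scaleR_scaleC)
  thus ?thesis by simp
qed
lemma sC_zero_right[simp]: "scaleC a (0::'a::complex_vector) = 0"
  using scaleC_add_right[of a "0::'a" 0] by simp
lemma sC_minus_left: "scaleC (- a) (x::'a::complex_vector) = - scaleC a x"
proof -
  have "0 = scaleC a x + scaleC (-a) x" using scaleC_add_left[of a "-a" x] by simp
  thus ?thesis by (metis add_eq_0_iff)
qed
lemma sC_minus_right: "scaleC a (- x::'a::complex_vector) = - scaleC a x"
proof -
  have "0 = scaleC a x + scaleC a (-x)" using scaleC_add_right[of a x "-x"] by simp
  thus ?thesis by (metis add_eq_0_iff)
qed
lemma sC_diff_left: "scaleC (a - b) (x::'a::complex_vector) = scaleC a x - scaleC b x"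
  using scaleC_add_left[of a "-b" x] sC_minus_left by simp
lemma sC_diff_right: "scaleC a (x - y::'a::complex_vector) = scaleC a x - scaleC a y"
  using scaleC_add_right[of a x "-y"] sC_minus_right by simp
lemma sC_of_real: "scaleC (complex_of_real r) (x::'a::complex_vector) = scaleR r x"
  by (simp add: scaleR_scaleC)
lemma sC_sum_right: "scaleC a (sum f A) = sum (\<lambda>i. scaleC a (f i::'a::complex_vector)) A"
  by (induct A rule: infinite_finite_induct) (auto simp: scaleC_add_right)
lemma sC_sum_left: "scaleC (sum f A) (x::'a::complex_vector) = sum (\<lambda>i. scaleC (f i) x) A"
  by (induct A rule: infinite_finite_induct) (auto simp: scaleC_add_left)
lemma sC_cancel: "a \<noteq> 0 \<Longrightarrow> scaleC a x = scaleC a (y::'a::complex_vector) \<Longrightarrow> x = y"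
  by (metis scaleC_scaleC scaleC_one field_class.field_inverse mult.commute)
lemma sC_zero_iff: "scaleC a (x::'a::complex_vector) = 0 \<longleftrightarrow> a = 0 \<or> x = 0"
  by (metis sC_cancel sC_zero_left sC_zero_right)

lemma sC_bounded_bilinear: "bounded_bilinear (scaleC :: complex \<Rightarrow> 'a::complex_normed_vector \<Rightarrow> 'a)"
  unfolding bounded_bilinear_def
proof (intro conjI allI)
  show "scaleC (a + a') b = scaleC a b + scaleC a' (b::'a)" for a a' b by (rule scaleC_add_left)
  show "scaleC a (b + b') = scaleC a b + scaleC a (b'::'a)" for a b b' by (rule scaleC_add_right)
  show "scaleC (r *\<^sub>R a) b = r *\<^sub>R scaleC a (b::'a)" for r a b
    by (simp add: scaleR_scaleC scaleC_scaleC scaleR_conv_of_real)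
  show "scaleC a (r *\<^sub>R b) = r *\<^sub>R scaleC a (b::'a)" for r a b
    by (simp add: scaleR_scaleC scaleC_scaleC mult.commute)
  show "\<exists>K. \<forall>a b. norm (scaleC a (b::'a)) \<le> norm a * norm b * K"
    by (rule exI[of _ 1]) (simp add: norm_scaleC)
qed
lemma tendsto_sC:
  "(f \<longlongrightarrow> a) F \<Longrightarrow> (g \<longlongrightarrow> (b::'a::complex_normed_vector)) F \<Longrightarrow> ((\<lambda>x. scaleC (f x) (g x)) \<longlongrightarrow> scaleC a b) F"
  by (rule bounded_bilinear.tendsto[OF sC_bounded_bilinear])

lemma ci_add_right: "cinner x (y + z::'a::chilbert_space) = cinner x y + cinner x z"
  by (metis cinner_commute cinner_add_left complex_cnj_add)
lemma ci_sC_right: "cinner x (scaleC c y::'a::chilbert_space) = c * cinner x y"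
  by (metis cinner_commute cinner_scaleC_left complex_cnj_mult complex_cnj_cnj)
lemma ci_zero_left[simp]: "cinner 0 (y::'a::chilbert_space) = 0"
  using cinner_add_left[of 0 0 y] by simp
lemma ci_zero_right[simp]: "cinner x (0::'a::chilbert_space) = 0"
  using ci_add_right[of x 0 0] by simp
lemma ci_minus_left: "cinner (- x) (y::'a::chilbert_space) = - cinner x y"
proof -
  have "0 = cinner x y + cinner (-x) y" using cinner_add_left[of x "-x" y] by simp
  thus ?thesis by (metis add_eq_0_iff)
qed
lemma ci_minus_right: "cinner x (- y::'a::chilbert_space) = - cinner x y"
proof -
  have "0 = cinner x y + cinner x (-y)" using ci_add_right[of x y "-y"] by simp
  thus ?thesis by (metis add_eq_0_iff)
qed
lemma ci_diff_left: "cinner (x - y) (z::'a::chilbert_space) = cinner x z - cinner y z"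
  using cinner_add_left[of x "-y" z] ci_minus_left by simp
lemma ci_diff_right: "cinner x (y - z::'a::chilbert_space) = cinner x y - cinner x z"
  using ci_add_right[of x y "-z"] ci_minus_right by simp
lemma ci_sum_right: "cinner x (sum f A) = sum (\<lambda>i. cinner x (f i::'a::chilbert_space)) A"
  by (induct A rule: infinite_finite_induct) (auto simp: ci_add_right)
lemma ci_sum_left: "cinner (sum f A) (x::'a::chilbert_space) = sum (\<lambda>i. cinner (f i) x) A"
  by (induct A rule: infinite_finite_induct) (auto simp: cinner_add_left)
lemma ci_self_Im: "Im (cinner x (x::'a::chilbert_space)) = 0"
proof -
  have "cinner x x = cnj (cinner x x)" by (rule cinner_commute)
  hence "Im (cinner x x) = - Im (cinner x x)" by (metis complex_cnj_cancel_iff cnj.simps(2))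
  thus ?thesis by simp
qed
lemma ci_self_Re: "Re (cinner x (x::'a::chilbert_space)) = norm x ^ 2"
proof -
  have "0 \<le> sqrt (Re (cinner x x))" using norm_cinner[of x] by (metis norm_ge_zero)
  hence "0 \<le> Re (cinner x x)" by simp
  thus ?thesis using norm_cinner[of x] by simp
qed
lemma ci_self: "cinner x (x::'a::chilbert_space) = complex_of_real (norm x ^ 2)"
  using ci_self_Im[of x] ci_self_Re[of x] by (simp add: complex_eq_iff)
lemma ci_self_eq0: "cinner x (x::'a::chilbert_space) = 0 \<longleftrightarrow> x = 0"
  by (simp add: ci_self)
lemma ci_ext_left: "(\<And>y. cinner u y = cinner v y) \<Longrightarrow> u = (v::'a::chilbert_space)"
  by (metis ci_diff_left ci_self_eq0 right_minus_eq)
lemma ci_ext_right: "(\<And>y. cinner y u = cinner y v) \<Longrightarrow> u = (v::'a::chilbert_space)"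
  by (metis ci_diff_right ci_self_eq0 right_minus_eq)

lemma cs_zero[simp]: "cstar (0::'a::cstar_algebra) = 0"
  using cstar_add[of "0::'a" 0] by simp
lemma cs_one[simp]: "cstar (1::'a::cstar_algebra) = 1"
proof -
  have "cstar (1::'a) = cstar 1 * 1" by simp
  also have "\<dots> = cstar 1 * cstar (cstar 1)" by (simp add: cstar_involutive)
  also have "\<dots> = cstar (cstar 1 * 1)" by (rule cstar_mult[symmetric])
  also have "\<dots> = 1" by (simp add: cstar_involutive)
  finally show ?thesis .
qed
lemma cs_scaleR: "cstar (scaleR r (x::'a::cstar_algebra)) = scaleR r (cstar x)"
  by (simp add: scaleR_scaleC cstar_scaleC)
lemma cs_minus: "cstar (- x::'a::cstar_algebra) = - cstar x"
  using cs_scaleR[of "-1" x] by simp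
lemma cs_diff: "cstar (x - y::'a::cstar_algebra) = cstar x - cstar y"
  using cstar_add[of x "-y"] cs_minus by simp
lemma cs_norm: "norm (cstar x) = norm (x::'a::cstar_algebra)"
proof -
  have le: "norm y \<le> norm (cstar y)" for y :: 'a
  proof (cases "y = 0")
    case False
    have "norm y * norm y = norm (cstar y * y)" by (rule cstar_identity[symmetric])
    also have "\<dots> \<le> norm (cstar y) * norm y" by (rule norm_mult_ineq)
    finally show ?thesis using False by simp
  qed simp
  show ?thesis using le[of x] le[of "cstar x"] by (simp add: cstar_involutive)
qed
lemma cs_bounded_linear: "bounded_linear (cstar::'a::cstar_algebra \<Rightarrow> 'a)"
  by (rule bounded_linear_intro[of _ 1]) (simp_all add: cstar_add cs_scaleR cs_norm)
lemma cs_power: "cstar a = a \<Longrightarrow> cstar (a ^ k) = (a::'a::cstar_algebra) ^ k"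
proof (induct k)
  case (Suc k)
  have "cstar (a ^ Suc k) = cstar (a ^ k) * cstar a" by (simp add: cstar_mult)
  also have "\<dots> = a ^ k * a" using Suc by simp
  also have "\<dots> = a ^ Suc k" by (simp add: power_commutes)
  finally show ?case .
qed simp
lemma cs_inj: "cstar x = cstar y \<Longrightarrow> x = (y::'a::cstar_algebra)"
  by (metis cstar_involutive)


declare scaleC_one[simp]

lemma st_add: "is_state \<omega> \<Longrightarrow> \<omega> (x + y) = \<omega> x + \<omega> y"
  by (simp add: is_state_def)
lemma st_sC: "is_state \<omega> \<Longrightarrow> \<omega> (scaleC c x) = c * \<omega> x"
  by (simp add: is_state_def)
lemma st_one: "is_state \<omega> \<Longrightarrow> \<omega> 1 = 1"
  by (simp add: is_state_def)
lemma st_pos: "is_state \<omega> \<Longrightarrow> Im (\<omega> (cstar y * y)) = 0 \<and> Re (\<omega> (cstar y * y)) \<ge> 0"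
  unfolding is_state_def cstar_positive_def by blast
lemma st_zero: "is_state \<omega> \<Longrightarrow> \<omega> 0 = 0"
  using st_sC[of \<omega> 0 0] by simp
lemma st_minus: "is_state \<omega> \<Longrightarrow> \<omega> (- x) = - \<omega> x"
  using st_sC[of \<omega> "-1" x] by (simp add: sC_minus_left)
lemma st_diff: "is_state \<omega> \<Longrightarrow> \<omega> (x - y) = \<omega> x - \<omega> y"
  using st_add[of \<omega> x "-y"] st_minus[of \<omega> y] by simp
lemma st_scaleR: "is_state \<omega> \<Longrightarrow> \<omega> (scaleR r x) = complex_of_real r * \<omega> x"
  using st_sC[of \<omega> "complex_of_real r" x] by (simp add: sC_of_real)
lemma st_sum: "is_state \<omega> \<Longrightarrow> \<omega> (sum f A) = sum (\<lambda>i. \<omega> (f i)) A"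
  by (induct A rule: infinite_finite_induct) (auto simp: st_add st_zero)

lemma st_sa_real:
  assumes w: "is_state \<omega>" and a: "cstar a = a"
  shows "Im (\<omega> a) = 0"
proof -
  have p: "cstar (1 + a) = 1 + a" "cstar (1 - a) = 1 - a" using a by (simp_all add: cstar_add cs_diff)
  have "(1 + a) * (1 + a) - (1 - a) * (1 - a) = a + a + a + a"
    by (simp add: algebra_simps)
  hence "\<omega> (a + a + a + a) = \<omega> (cstar (1 + a) * (1 + a)) - \<omega> (cstar (1 - a) * (1 - a))"
    using p st_diff[OF w] by metis
  hence "4 * \<omega> a = \<omega> (cstar (1 + a) * (1 + a)) - \<omega> (cstar (1 - a) * (1 - a))"
    by (simp add: st_add[OF w])
  hence "Im (4 * \<omega> a) = 0" using st_pos[OF w, of "1+a"] st_pos[OF w, of "1-a"] by simp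
  thus ?thesis by simp
qed

lemma st_sa_ofreal: "is_state \<omega> \<Longrightarrow> cstar a = a \<Longrightarrow> \<omega> a = complex_of_real (Re (\<omega> a))"
  using st_sa_real[of \<omega> a] by (simp add: complex_eq_iff)

lemma st_cnj:
  assumes w: "is_state \<omega>"
  shows "\<omega> (cstar x) = cnj (\<omega> x)"
proof -
  have u: "cstar (x + cstar x) = x + cstar x" by (simp add: cstar_add cstar_involutive add.commute)
  have v: "cstar (scaleC \<i> (x - cstar x)) = scaleC \<i> (x - cstar x)"
    by (simp add: cstar_scaleC cs_diff cstar_involutive) (metis sC_minus_left sC_minus_right minus_diff_eq)
  have 1: "Im (\<omega> x + \<omega> (cstar x)) = 0" using st_sa_real[OF w u] st_add[OF w] by simp
  have 2: "Im (\<i> * (\<omega> x - \<omega> (cstar x))) = 0" using st_sa_real[OF w v] st_sC[OF w] st_diff[OF w] by simp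
  show ?thesis using 1 2 by (simp add: complex_eq_iff)
qed

lemma cs_expand:
  "cstar (y + scaleC t z) * (y + scaleC t z) =
    cstar y * y + scaleC t (cstar y * z) + scaleC (cnj t) (cstar z * y) + scaleC (t * cnj t) (cstar z * (z::'a::cstar_algebra))"
  by (simp add: cstar_add cstar_scaleC distrib_left distrib_right scaleC_mult_left mult_scaleC_right
      scaleC_scaleC add.assoc scaleC_add_right)

lemma st_cs0:
  assumes w: "is_state \<omega>" and z: "\<omega> (cstar z * z) = 0"
  shows "\<omega> (cstar y * z) = 0"
proof (rule ccontr)
  let ?c = "\<omega> (cstar y * z)" and ?A = "Re (\<omega> (cstar y * y))"
  assume c: "?c \<noteq> 0"
  have zy: "\<omega> (cstar z * y) = cnj ?c"
    using st_cnj[OF w, of "cstar y * z"] by (simp add: cstar_mult cstar_involutive)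
  have key: "?A + 2 * Re (t * ?c) \<ge> 0" for t
  proof -
    have "Re (\<omega> (cstar (y + scaleC t z) * (y + scaleC t z))) \<ge> 0" using st_pos[OF w] by blast
    also have "\<omega> (cstar (y + scaleC t z) * (y + scaleC t z)) =
       \<omega> (cstar y * y) + t * ?c + cnj t * cnj ?c + t * cnj t * 0"
      unfolding cs_expand by (simp add: st_add[OF w] st_sC[OF w] zy z)
    finally show ?thesis by simp
  qed
  define K where "K = (cmod ?c)^2"
  have n: "K > 0" using c by (simp add: K_def)
  define r where "r = (?A + 1) / (2 * K)"
  have "Re (complex_of_real (- r) * cnj ?c * ?c) = - r * K"
    unfolding K_def cmod_power2 by (simp add: complex_mult_cnj mult.assoc power2_eq_square del: of_real_power)
  hence "?A + 2 * (- r * K) \<ge> 0" using key[of "complex_of_real (- r) * cnj ?c"] by simp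
  moreover have "2 * (r * K) = ?A + 1" using n unfolding r_def by (simp add: field_simps)
  ultimately show False by simp
qed

lemma st_mult:
  assumes w: "is_state \<omega>" and a: "cstar a = a" and sq: "\<omega> (a * a) = (\<omega> a)^2"
  shows "\<omega> (x * a) = \<omega> x * \<omega> a" and "\<omega> (a * x) = \<omega> a * \<omega> x"
proof -
  let ?l = "\<omega> a"
  have lr: "cnj ?l = ?l" using st_sa_real[OF w a] by (simp add: complex_eq_iff)
  define z where "z = a - scaleC ?l 1"
  have zs: "cstar z = z" unfolding z_def by (simp add: cs_diff cstar_scaleC lr a)
  have "z * z = a * a - scaleC ?l a - scaleC ?l a + scaleC (?l * ?l) 1"
    unfolding z_def by (simp add: algebra_simps scaleC_mult_left mult_scaleC_right scaleC_scaleC sC_diff_right)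
  hence "\<omega> (z * z) = \<omega> (a * a) - ?l * ?l - ?l * ?l + ?l * ?l"
    by (simp add: st_add[OF w] st_diff[OF w] st_sC[OF w] st_one[OF w])
  hence zz: "\<omega> (cstar z * z) = 0" using sq zs by (simp add: power2_eq_square)
  have "\<omega> (cstar (cstar x) * z) = 0" by (rule st_cs0[OF w zz])
  hence "\<omega> (x * z) = 0" by (simp add: cstar_involutive)
  thus "\<omega> (x * a) = \<omega> x * \<omega> a"
    unfolding z_def by (simp add: right_diff_distrib mult_scaleC_right st_diff[OF w] st_sC[OF w] mult.commute)
  have "\<omega> (cstar (cstar x * z)) = 0" using st_cnj[OF w] st_cs0[OF w zz, of "x"] by simp
  hence "\<omega> (z * x) = 0" by (simp add: cstar_mult zs cstar_involutive)
  thus "\<omega> (a * x) = \<omega> a * \<omega> x"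
    unfolding z_def by (simp add: left_diff_distrib scaleC_mult_left st_diff[OF w] st_sC[OF w])
qed

lemma bop_add_h: "bounded_op T \<Longrightarrow> T (x + y) = T x + T y" by (simp add: bounded_op_def)
lemma bop_sC_h: "bounded_op T \<Longrightarrow> T (scaleC c x) = scaleC c (T x)" by (simp add: bounded_op_def)
lemma bop_zero_h: "bounded_op T \<Longrightarrow> T 0 = 0"
  using bop_sC_h[of T 0 0] by simp
lemma bop_minus_h: "bounded_op T \<Longrightarrow> T (- x) = - T x"
  using bop_sC_h[of T "-1" x] by (simp add: sC_minus_left)
lemma bop_diff_h: "bounded_op T \<Longrightarrow> T (x - y) = T x - T y"
  using bop_add_h[of T x "-y"] bop_minus_h[of T y] by simp
lemma bop_sum_h: "bounded_op T \<Longrightarrow> T (sum f A) = sum (\<lambda>i. T (f i)) A"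
  by (induct A rule: infinite_finite_induct) (auto simp: bop_add_h bop_zero_h)
lemma bop_scaleR_h: "bounded_op T \<Longrightarrow> T (scaleR r x) = scaleR r (T x)"
  using bop_sC_h[of T "complex_of_real r" x] by (simp add: sC_of_real)
lemma bop_bounded_linear: "bounded_op T \<Longrightarrow> bounded_linear T"
proof -
  assume T: "bounded_op T"
  then obtain K where K: "\<And>x. norm (T x) \<le> K * norm x" unfolding bounded_op_def by blast
  show ?thesis
    by (rule bounded_linear_intro[of _ K]) (auto simp: bop_add_h[OF T] bop_scaleR_h[OF T] K mult.commute)
qed

lemma bop_add: "bounded_op S \<Longrightarrow> bounded_op T \<Longrightarrow> bounded_op (\<lambda>h. S h + T h)"
proof -
  assume S: "bounded_op S" and T: "bounded_op T"
  obtain K1 where K1: "\<And>x. norm (S x) \<le> K1 * norm x" using S unfolding bounded_op_def by blast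
  obtain K2 where K2: "\<And>x. norm (T x) \<le> K2 * norm x" using T unfolding bounded_op_def by blast
  have "norm (S x + T x) \<le> (K1 + K2) * norm x" for x
    using norm_triangle_ineq[of "S x" "T x"] K1[of x] K2[of x] by (simp add: distrib_right)
  thus ?thesis using S T unfolding bounded_op_def by (auto simp: scaleC_add_right)
qed
lemma bop_sC: "bounded_op T \<Longrightarrow> bounded_op (\<lambda>h. scaleC c (T h))"
proof -
  assume T: "bounded_op T"
  obtain K where K: "\<And>x. norm (T x) \<le> K * norm x" using T unfolding bounded_op_def by blast
  have "norm (scaleC c (T x)) \<le> (cmod c * K) * norm x" for x
    using K[of x] by (simp add: norm_scaleC mult.assoc mult_left_mono)
  hence 3: "\<exists>K. \<forall>x. norm (scaleC c (T x)) \<le> K * norm x" by blast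
  have "scaleC c (T (scaleC d x)) = scaleC d (scaleC c (T x))" for d x
    using T by (simp add: bop_sC_h scaleC_scaleC mult.commute)
  thus ?thesis using T 3 unfolding bounded_op_def by (auto simp: scaleC_add_right)
qed
lemma bop_comp: "bounded_op S \<Longrightarrow> bounded_op T \<Longrightarrow> bounded_op (S \<circ> T)"
proof -
  assume S: "bounded_op S" and T: "bounded_op T"
  obtain K1 where K1: "\<And>x. norm (S x) \<le> K1 * norm x" using S unfolding bounded_op_def by blast
  obtain K2 where K2: "\<And>x. norm (T x) \<le> K2 * norm x" using T unfolding bounded_op_def by blast
  have "norm (S (T x)) \<le> (max K1 0 * max K2 0) * norm x" for x
  proof -
    have "norm (S (T x)) \<le> K1 * norm (T x)" by (rule K1)
    also have "\<dots> \<le> max K1 0 * norm (T x)" by (simp add: mult_right_mono)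
    also have "\<dots> \<le> max K1 0 * (max K2 0 * norm x)"
      using K2[of x] by (intro mult_left_mono) (auto intro: order.trans simp: mult_right_mono)
    finally show ?thesis by (simp add: mult.assoc)
  qed
  thus ?thesis using S T unfolding bounded_op_def by auto
qed
lemma bop_zero: "bounded_op (\<lambda>h. 0)"
  unfolding bounded_op_def by (auto intro: exI[of _ 0])
lemma bop_id: "bounded_op id"
  unfolding bounded_op_def by (auto intro: exI[of _ 1])
lemma bop_sum: "finite A \<Longrightarrow> (\<And>i. i \<in> A \<Longrightarrow> bounded_op (f i)) \<Longrightarrow> bounded_op (\<lambda>h. \<Sum>i\<in>A. f i h)"
  by (induct A rule: finite_induct) (auto simp: bop_zero bop_add)

lemma pos_sa:
  assumes T: "op_positive T"
  shows "op_selfadjoint T"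
proof -
  have b: "bounded_op T" using T by (simp add: op_positive_def)
  have q: "Im (cinner v (T v)) = 0" for v using T by (simp add: op_positive_def)
  have "cinner (T x) y = cinner x (T y)" for x y
  proof -
    let ?u = "cinner x (T y)" and ?v = "cinner y (T x)"
    have "cinner (x + y) (T (x + y)) = cinner x (T x) + cinner y (T y) + ?u + ?v"
      by (simp add: bop_add_h[OF b] cinner_add_left ci_add_right)
    hence 1: "Im (?u + ?v) = 0" using q[of "x+y"] q[of x] q[of y] by simp
    have "cinner (x + scaleC \<i> y) (T (x + scaleC \<i> y)) = cinner x (T x) + cinner y (T y) + \<i> * ?u - \<i> * ?v"
      by (simp add: bop_add_h[OF b] bop_sC_h[OF b] cinner_add_left ci_add_right cinner_scaleC_left ci_sC_right;
          simp add: algebra_simps)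
    hence 2: "Im (\<i> * ?u - \<i> * ?v) = 0" using q[of "x + scaleC \<i> y"] q[of x] q[of y] by simp
    have "?u = cnj ?v" using 1 2 by (simp add: complex_eq_iff)
    thus ?thesis by (metis cinner_commute)
  qed
  thus ?thesis using b by (simp add: op_selfadjoint_def)
qed

lemma pos_kernel:
  assumes T: "op_positive T" and y: "cinner y (T y) = 0"
  shows "T y = 0"
proof (rule ccontr)
  assume nz: "T y \<noteq> 0"
  have b: "bounded_op T" using T by (simp add: op_positive_def)
  have sa: "cinner (T u) v = cinner u (T v)" for u v using pos_sa[OF T] by (simp add: op_selfadjoint_def)
  let ?z = "T y"
  let ?N = "norm ?z ^ 2" and ?Q = "Re (cinner ?z (T ?z))"
  have N: "?N > 0" using nz by simp
  have Q: "?Q \<ge> 0" using T by (simp add: op_positive_def)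
  have key: "Re (cinner (y + scaleC (complex_of_real t) ?z) (T (y + scaleC (complex_of_real t) ?z)))
        = 2 * t * ?N + t^2 * ?Q" for t
  proof -
    have e1: "cinner y (T ?z) = cinner ?z ?z" using sa[of y ?z] by simp
    show ?thesis
      by (simp add: bop_add_h[OF b] bop_sC_h[OF b] cinner_add_left ci_add_right cinner_scaleC_left
          ci_sC_right y e1 ci_self power2_eq_square; simp add: algebra_simps)
  qed
  define s where "s = ?N / (?Q + 1)"
  have "Re (cinner (y + scaleC (complex_of_real (- s)) ?z) (T (y + scaleC (complex_of_real (- s)) ?z))) \<ge> 0"
    using T by (simp add: op_positive_def)
  hence "2 * (- s) * ?N + (- s)^2 * ?Q \<ge> 0" by (simp only: key)
  hence A: "s * (s * ?Q - 2 * ?N) \<ge> 0" by (simp add: algebra_simps power2_eq_square)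
  have sp: "s > 0" using N Q unfolding s_def by simp
  have B: "s * ?Q \<ge> 2 * ?N" using A sp by (simp add: zero_le_mult_iff)
  have "s * ?Q \<le> ?N" using N Q unfolding s_def by (simp add: field_simps)
  thus False using N B by simp
qed


lemma gb_half_le: "\<bar>((1/2::real) gchoose k)\<bar> \<le> 1"
proof (induct k)
  case (Suc k)
  have e: "(1/2::real) gchoose (Suc k) = ((1/2 - of_nat k) / (of_nat k + 1)) * ((1/2) gchoose k)"
    using gbinomial_mult_1[of "1/2::real" k] by (simp add: field_simps)
  have f: "\<bar>(1/2 - real k) / (real k + 1)\<bar> \<le> 1" by (simp add: abs_if field_simps)
  have "\<bar>(1/2::real) gchoose (Suc k)\<bar> = \<bar>(1/2 - real k) / (real k + 1)\<bar> * \<bar>(1/2) gchoose k\<bar>"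
    unfolding e by (simp add: abs_mult)
  also have "\<dots> \<le> 1 * 1" using f Suc by (intro mult_mono) auto
  finally show ?case by simp
qed simp

lemma one_gchoose: "(1::real) gchoose k = (if k = 0 \<or> k = 1 then 1 else 0)"
proof -
  have "(1::real) gchoose k = of_nat (1 choose k)" using binomial_gbinomial[of 1 k] by (metis of_nat_1)
  thus ?thesis by (cases k) (auto simp: binomial_eq_0)
qed

lemma half_conv: "(\<Sum>i\<le>k. ((1/2::real) gchoose i) * ((1/2) gchoose (k - i))) = (1::real) gchoose k"
  using gbinomial_Vandermonde[of "1/2::real" "1/2" k] by (simp add: atLeast0AtMost)

lemma cstar_sqrt:
  fixes a :: "'a::cstar_algebra"
  assumes a: "cstar a = a" and n: "norm a < 1"
  shows "\<exists>y. cstar y * y = 1 - a"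
proof -
  define c where "c k = ((1/2::real) gchoose k) * (-1)^k" for k
  define f where "f k = c k *\<^sub>R a ^ k" for k
  have cle: "\<bar>c k\<bar> \<le> 1" for k unfolding c_def using gb_half_le[of k] by (simp add: abs_mult)
  have fn: "norm (f k) \<le> norm a ^ k" for k
  proof -
    have "norm (f k) = \<bar>c k\<bar> * norm (a ^ k)" unfolding f_def by simp
    also have "\<dots> \<le> 1 * norm a ^ k" using cle[of k] norm_power_ineq[of a k] by (intro mult_mono) auto
    finally show ?thesis by simp
  qed
  have sn: "summable (\<lambda>k. norm (f k))"
    by (rule summable_comparison_test[OF _ summable_geometric[of "norm a"]]) (use fn n in auto)
  have cp: "(\<lambda>k. \<Sum>i\<le>k. f i * f (k - i)) sums (suminf f * suminf f)"
    by (rule Cauchy_product_sums[OF sn sn])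
  have trm: "(\<Sum>i\<le>k. f i * f (k - i)) = (if k = 0 then 1 else 0) + (if k = 1 then - a else 0)" for k
  proof -
    have "f i * f (k - i) = (c i * c (k - i)) *\<^sub>R a ^ k" if "i \<le> k" for i
    proof -
      have "a ^ i * a ^ (k - i) = a ^ k" using that by (simp add: power_add[symmetric])
      thus ?thesis unfolding f_def by (simp add: mult.assoc)
    qed
    hence "(\<Sum>i\<le>k. f i * f (k - i)) = (\<Sum>i\<le>k. c i * c (k - i)) *\<^sub>R a ^ k"
      by (simp add: scaleR_sum_left)
    also have "(\<Sum>i\<le>k. c i * c (k - i)) = (-1)^k * ((1::real) gchoose k)"
    proof -
      have "c i * c (k - i) = (-1)^k * (((1/2::real) gchoose i) * ((1/2) gchoose (k - i)))" if "i \<le> k" for i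
      proof -
        have "(-1::real)^i * (-1)^(k-i) = (-1)^k" using that by (simp add: power_add[symmetric])
        thus ?thesis unfolding c_def by (simp add: algebra_simps)
      qed
      hence "(\<Sum>i\<le>k. c i * c (k - i)) = (\<Sum>i\<le>k. (-1)^k * (((1/2::real) gchoose i) * ((1/2) gchoose (k - i))))"
        by simp
      also have "\<dots> = (-1)^k * ((1::real) gchoose k)" by (simp add: sum_distrib_left[symmetric] half_conv)
      finally show ?thesis .
    qed
    finally show ?thesis by (auto simp: one_gchoose)
  qed
  have "(\<lambda>k. (if k = 0 then 1 else 0) + (if k = 1 then - a else 0)) sums (1 + - a)"
    by (rule sums_add) (use sums_single[of 0 "\<lambda>_. 1::'a"] sums_single[of 1 "\<lambda>_. -a"] in auto)
  hence "(\<lambda>k. \<Sum>i\<le>k. f i * f (k - i)) sums (1 - a)" by (simp add: trm)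
  hence yy: "suminf f * suminf f = 1 - a" using cp sums_unique2 by blast
  have "cstar (suminf f) = suminf (\<lambda>k. cstar (f k))"
    by (rule bounded_linear.suminf[OF cs_bounded_linear]) (rule summable_norm_cancel[OF sn])
  also have "(\<lambda>k. cstar (f k)) = f" unfolding f_def by (auto simp: cs_scaleR cs_power[OF a])
  finally have "cstar (suminf f) = suminf f" .
  thus ?thesis using yy by metis
qed

lemma st_le1:
  assumes w: "is_state \<omega>" and a: "cstar a = a" and n: "norm a < 1"
  shows "Re (\<omega> a) \<le> 1"
proof -
  obtain y where y: "cstar y * y = 1 - a" using cstar_sqrt[OF a n] by blast
  have "Re (\<omega> (1 - a)) \<ge> 0" using st_pos[OF w, of y] y by simp
  thus ?thesis by (simp add: st_diff[OF w] st_one[OF w])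
qed

lemma st_bound:
  assumes w: "is_state \<omega>" and a: "cstar a = a"
  shows "cmod (\<omega> a) \<le> norm a"
proof -
  have im: "Im (\<omega> a) = 0" by (rule st_sa_real[OF w a])
  have "\<bar>Re (\<omega> a)\<bar> \<le> t" if t: "norm a < t" for t
  proof -
    have tp: "t > 0" using t norm_ge_zero[of a] by linarith
    have n1: "norm (scaleR (1/t) a) < 1" using t tp by (simp add: field_simps)
    have n2: "norm (scaleR (1/t) (- a)) < 1" using t tp by (simp add: field_simps)
    have s1: "cstar (scaleR (1/t) a) = scaleR (1/t) a" by (simp add: cs_scaleR a)
    have s2: "cstar (scaleR (1/t) (- a)) = scaleR (1/t) (- a)" by (simp add: cs_scaleR cs_minus a)
    have "Re (\<omega> a) / t \<le> 1" using st_le1[OF w s1 n1] by (simp add: st_scaleR[OF w])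
    moreover have "- Re (\<omega> a) / t \<le> 1" using st_le1[OF w s2 n2] by (simp add: st_scaleR[OF w] st_minus[OF w])
    ultimately show ?thesis using tp by (simp add: field_simps abs_if)
  qed
  hence "\<bar>Re (\<omega> a)\<bar> \<le> norm a" by (rule dense_ge)
  thus ?thesis using im by (simp add: cmod_def)
qed


lemma st_var:
  assumes w: "is_state \<omega>" and a: "cstar a = a"
  shows "\<omega> ((a - scaleC (\<omega> a) 1) * (a - scaleC (\<omega> a) 1)) = \<omega> (a * a) - (\<omega> a)^2"
    and "cstar (a - scaleC (\<omega> a) 1) = a - scaleC (\<omega> a) 1"
proof -
  let ?l = "\<omega> a"
  have lr: "cnj ?l = ?l" using st_sa_real[OF w a] by (simp add: complex_eq_iff)
  have "(a - scaleC ?l 1) * (a - scaleC ?l 1) = a * a - scaleC ?l a - scaleC ?l a + scaleC (?l * ?l) 1"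
    by (simp add: algebra_simps scaleC_mult_left mult_scaleC_right scaleC_scaleC sC_diff_right)
  thus "\<omega> ((a - scaleC ?l 1) * (a - scaleC ?l 1)) = \<omega> (a * a) - ?l^2"
    by (simp add: st_add[OF w] st_diff[OF w] st_sC[OF w] st_one[OF w] power2_eq_square)
  show "cstar (a - scaleC ?l 1) = a - scaleC ?l 1" by (simp add: cs_diff cstar_scaleC lr a)
qed

lemma st_sq_ge:
  assumes w: "is_state \<omega>" and a: "cstar a = a"
  shows "Im (\<omega> (a * a) - (\<omega> a)^2) = 0 \<and> Re (\<omega> (a * a) - (\<omega> a)^2) \<ge> 0"
  using st_pos[OF w, of "a - scaleC (\<omega> a) 1"] st_var[OF w a] by simp

locale stp =
  fixes \<phi> :: "'a::cstar_algebra \<Rightarrow> 'h::chilbert_space \<Rightarrow> 'h"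
    and n :: nat and \<omega> :: "nat \<Rightarrow> 'a \<Rightarrow> complex" and b :: "nat \<Rightarrow> 'h \<Rightarrow> 'h"
  assumes add: "\<And>x y. \<phi> (x + y) = (\<lambda>h. \<phi> x h + \<phi> y h)"
    and scal: "\<And>c x. \<phi> (scaleC c x) = (\<lambda>h. scaleC c (\<phi> x h))"
    and unital: "\<phi> 1 = id"
    and states: "\<And>i. i < n \<Longrightarrow> is_state (\<omega> i)"
    and bpos: "\<And>i. i < n \<Longrightarrow> op_positive (b i)"
    and form: "\<And>x. \<phi> x = (\<lambda>h. \<Sum>i<n. scaleC (\<omega> i x) (b i h))"
begin

definition good where
  "good a \<longleftrightarrow> cstar a = a \<and>
     (\<forall>i<n. b i \<noteq> (\<lambda>h. 0) \<longrightarrow> (\<forall>x. \<omega> i (x * a) = \<omega> i x * \<omega> i a \<and> \<omega> i (a * x) = \<omega> i a * \<omega> i x)) \<and>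
     (\<forall>i<n. \<forall>h. b i (\<phi> a h) = scaleC (\<omega> i a) (b i h))"

lemma phi_h: "\<phi> x h = (\<Sum>i<n. scaleC (\<omega> i x) (b i h))"
  by (simp add: form)
lemma bb: "i < n \<Longrightarrow> bounded_op (b i)"
  using bpos by (simp add: op_positive_def)
lemma bsa: "i < n \<Longrightarrow> cinner (b i x) y = cinner x (b i y)"
  using pos_sa[OF bpos] by (simp add: op_selfadjoint_def)
lemma bposh: "i < n \<Longrightarrow> Im (cinner x (b i x)) = 0 \<and> Re (cinner x (b i x)) \<ge> 0"
  using bpos by (simp add: op_positive_def)
lemma sumb: "(\<Sum>i<n. b i h) = h"
proof -
  have "h = \<phi> 1 h" by (simp add: unital)
  also have "\<dots> = (\<Sum>i<n. b i h)" unfolding phi_h by (intro sum.cong) (auto simp: st_one[OF states])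
  finally show ?thesis by simp
qed
lemma phi_bop: "bounded_op (\<phi> x)"
  unfolding form by (intro bop_sum bop_sC bb) auto
lemma phi_add_h: "\<phi> (x + y) h = \<phi> x h + \<phi> y h" by (simp add: add)
lemma phi_sC_h: "\<phi> (scaleC c x) h = scaleC c (\<phi> x h)" by (simp add: scal)
lemma phi_zero_h: "\<phi> 0 h = 0" using phi_sC_h[of 0 0 h] by simp
lemma phi_zero: "\<phi> 0 = (\<lambda>h. 0)" using phi_zero_h by auto
lemma phi_minus_h: "\<phi> (- x) h = - \<phi> x h"
  using phi_sC_h[of "-1" x h] by (simp add: sC_minus_left)
lemma phi_diff_h: "\<phi> (x - y) h = \<phi> x h - \<phi> y h"
  using phi_add_h[of x "-y" h] phi_minus_h[of y h] by simp
lemma phi_scaleR_h: "\<phi> (scaleR r x) h = scaleR r (\<phi> x h)"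
  using phi_sC_h[of "complex_of_real r" x h] by (simp add: sC_of_real)
lemma phi_lin_h: "bounded_op T \<Longrightarrow> T (\<phi> x h) = (\<Sum>i<n. scaleC (\<omega> i x) (T (b i h)))"
  by (simp add: phi_h bop_sum_h bop_sC_h)

lemma phi_sa:
  assumes a: "cstar a = a"
  shows "cinner (\<phi> a x) y = cinner x (\<phi> a y)"
proof -
  have r: "i < n \<Longrightarrow> cnj (\<omega> i a) = \<omega> i a" for i
    using st_sa_real[OF states a] by (simp add: complex_eq_iff)
  show ?thesis unfolding phi_h
    apply (simp add: ci_sum_left ci_sum_right cinner_scaleC_left ci_sC_right)
    by (rule sum.cong) (auto simp: r bsa)
qed
lemma phi_op_sa: "cstar a = a \<Longrightarrow> op_selfadjoint (\<phi> a)"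
  using phi_sa phi_bop by (simp add: op_selfadjoint_def)

lemma b_nz: "b i \<noteq> (\<lambda>h. 0) \<Longrightarrow> i < n \<Longrightarrow> \<exists>h. Re (cinner h (b i h)) \<noteq> 0"
proof -
  assume nz: "b i \<noteq> (\<lambda>h. 0)" and i: "i < n"
  then obtain h where h: "b i h \<noteq> 0" by auto
  have "cinner h (b i h) \<noteq> 0" using pos_kernel[OF bpos[OF i]] h by blast
  moreover have "Im (cinner h (b i h)) = 0" using bposh[OF i] by blast
  ultimately have "Re (cinner h (b i h)) \<noteq> 0" by (simp add: complex_eq_iff)
  thus ?thesis by blast
qed

lemma defin_good:
  assumes a: "cstar a = a" and D: "\<phi> (a * a) = \<phi> a \<circ> \<phi> a"
  shows "good a"
proof -
  let ?T = "\<phi> a"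
  have lr: "i < n \<Longrightarrow> cnj (\<omega> i a) = \<omega> i a" for i
    using st_sa_real[OF states a] by (simp add: complex_eq_iff)
  have Tsa: "cinner (?T x) y = cinner x (?T y)" for x y by (rule phi_sa[OF a])
  define y where "y i h = scaleC (\<omega> i a) h - ?T h" for i h
  define d where "d i = \<omega> i (a * a) - (\<omega> i a)^2" for i
  have dpos: "i < n \<Longrightarrow> Im (d i) = 0 \<and> Re (d i) \<ge> 0" for i
    unfolding d_def using st_sq_ge[OF states a] by blast
  have trm: "cinner (y i h) (b i (y i h)) = (\<omega> i a)^2 * cinner h (b i h) - \<omega> i a * cinner h (b i (?T h))
       - \<omega> i a * cinner (?T h) (b i h) + cinner (?T h) (b i (?T h))" if i: "i < n" for i h
    unfolding y_def using lr[OF i]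
    by (simp add: bop_diff_h[OF bb[OF i]] bop_sC_h[OF bb[OF i]] ci_diff_left ci_diff_right
        cinner_scaleC_left ci_sC_right power2_eq_square; simp add: algebra_simps)
  have ident: "(\<Sum>i<n. d i * cinner h (b i h) + cinner (y i h) (b i (y i h))) = 0" for h
  proof -
    have s1: "(\<Sum>i<n. \<omega> i a * cinner h (b i (?T h))) = cinner h (?T (?T h))"
      by (simp add: phi_h[of a "?T h"] ci_sum_right ci_sC_right)
    have s2: "(\<Sum>i<n. \<omega> i a * cinner (?T h) (b i h)) = cinner (?T h) (?T h)"
      by (simp add: phi_h[of a h] ci_sum_right ci_sC_right)
    have s3: "(\<Sum>i<n. cinner (?T h) (b i (?T h))) = cinner (?T h) (?T h)"
      by (simp add: ci_sum_right[symmetric] sumb)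
    have s4: "(\<Sum>i<n. \<omega> i (a * a) * cinner h (b i h)) = cinner h (?T (?T h))"
    proof -
      have "cinner h (?T (?T h)) = cinner h (\<phi> (a * a) h)" using D by simp
      also have "\<dots> = (\<Sum>i<n. \<omega> i (a * a) * cinner h (b i h))"
        by (simp add: phi_h[of "a*a" h] ci_sum_right ci_sC_right)
      finally show ?thesis by simp
    qed
    have "(\<Sum>i<n. d i * cinner h (b i h) + cinner (y i h) (b i (y i h))) =
      (\<Sum>i<n. \<omega> i (a * a) * cinner h (b i h)) - (\<Sum>i<n. \<omega> i a * cinner h (b i (?T h)))
      - (\<Sum>i<n. \<omega> i a * cinner (?T h) (b i h)) + (\<Sum>i<n. cinner (?T h) (b i (?T h)))"
    proof -
      have e: "d i * cinner h (b i h) + cinner (y i h) (b i (y i h)) = \<omega> i (a * a) * cinner h (b i h)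
        - \<omega> i a * cinner h (b i (?T h)) - \<omega> i a * cinner (?T h) (b i h) + cinner (?T h) (b i (?T h))"
        if "i \<in> {..<n}" for i
        using trm[of i h] that by (simp add: d_def algebra_simps)
      have "(\<Sum>i<n. d i * cinner h (b i h) + cinner (y i h) (b i (y i h))) = (\<Sum>i<n. \<omega> i (a * a) * cinner h (b i h)
        - \<omega> i a * cinner h (b i (?T h)) - \<omega> i a * cinner (?T h) (b i h) + cinner (?T h) (b i (?T h)))"
        by (rule sum.cong[OF refl e])
      thus ?thesis by (simp add: sum.distrib sum_subtractf)
    qed
    also have "\<dots> = 0" by (simp add: s1 s2 s3 s4)
    finally show ?thesis .
  qed
  have tpos: "Im (d i * cinner h (b i h)) = 0 \<and> Re (d i * cinner h (b i h)) \<ge> 0 \<and>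
      Im (cinner (y i h) (b i (y i h))) = 0 \<and> Re (cinner (y i h) (b i (y i h))) \<ge> 0" if i: "i < n" for i h
    using dpos[OF i] bposh[OF i, of h] bposh[OF i, of "y i h"] by simp
  have zero: "Re (d i * cinner h (b i h)) = 0 \<and> cinner (y i h) (b i (y i h)) = 0" if i: "i < n" for i h
  proof -
    have "Re (\<Sum>i<n. d i * cinner h (b i h) + cinner (y i h) (b i (y i h))) = 0" using ident by simp
    hence "(\<Sum>i<n. Re (d i * cinner h (b i h) + cinner (y i h) (b i (y i h)))) = 0" by (simp add: Re_sum)
    hence "\<forall>j\<in>{..<n}. Re (d j * cinner h (b j h) + cinner (y j h) (b j (y j h))) = 0"
      by (subst (asm) sum_nonneg_eq_0_iff) (use tpos in auto)
    hence "Re (d i * cinner h (b i h)) + Re (cinner (y i h) (b i (y i h))) = 0" using i by simp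
    thus ?thesis using tpos[OF i, of h] by (simp add: complex_eq_iff)
  qed
  have bT: "b i (?T h) = scaleC (\<omega> i a) (b i h)" if i: "i < n" for i h
  proof -
    have "b i (y i h) = 0" using pos_kernel[OF bpos[OF i]] zero[OF i] by blast
    thus ?thesis unfolding y_def by (simp add: bop_diff_h[OF bb[OF i]] bop_sC_h[OF bb[OF i]])
  qed
  have mult: "\<forall>x. \<omega> i (x * a) = \<omega> i x * \<omega> i a \<and> \<omega> i (a * x) = \<omega> i a * \<omega> i x"
    if i: "i < n" and nz: "b i \<noteq> (\<lambda>h. 0)" for i
  proof -
    obtain h where h: "Re (cinner h (b i h)) \<noteq> 0" using b_nz[OF nz i] by blast
    have "Re (d i * cinner h (b i h)) = Re (d i) * Re (cinner h (b i h))"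
      using dpos[OF i] bposh[OF i, of h] by simp
    hence "Re (d i) * Re (cinner h (b i h)) = 0" using zero[OF i, of h] by metis
    hence "Re (d i) = 0" using h by simp
    hence "d i = 0" using dpos[OF i] by (simp add: complex_eq_iff)
    hence "\<omega> i (a * a) = (\<omega> i a)^2" by (simp add: d_def)
    thus ?thesis using st_mult[OF states[OF i] a] by blast
  qed
  show ?thesis unfolding good_def using a bT mult by blast
qed

lemma good_defin:
  assumes g: "good a"
  shows "\<phi> (a * a) = \<phi> a \<circ> \<phi> a"
proof
  fix h
  have "\<phi> a (\<phi> a h) = (\<Sum>i<n. scaleC (\<omega> i a) (b i (\<phi> a h)))" by (rule phi_h)
  also have "\<dots> = (\<Sum>i<n. scaleC (\<omega> i (a * a)) (b i h))"
  proof (rule sum.cong)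
    fix i assume "i \<in> {..<n}" hence i: "i < n" by simp
    show "scaleC (\<omega> i a) (b i (\<phi> a h)) = scaleC (\<omega> i (a * a)) (b i h)"
    proof (cases "b i = (\<lambda>h. 0)")
      case True thus ?thesis by simp
    next
      case False
      hence "\<omega> i (a * a) = \<omega> i a * \<omega> i a" using g i unfolding good_def by blast
      thus ?thesis using g i unfolding good_def by (simp add: scaleC_scaleC)
    qed
  qed simp
  finally show "\<phi> (a * a) h = (\<phi> a \<circ> \<phi> a) h" by (simp add: phi_h)
qed

lemma D_eq: "definite_set \<phi> = {a. good a}"
  unfolding definite_set_def using defin_good good_defin good_def by blast

end


context stp begin

lemma bsum_cong:
  assumes "\<And>i. i < n \<Longrightarrow> b i \<noteq> (\<lambda>h. 0) \<Longrightarrow> \<alpha> i = \<beta> i"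
  shows "(\<Sum>i<n. scaleC (\<alpha> i) (b i h)) = (\<Sum>i<n. scaleC (\<beta> i) (b i h))"
proof (rule sum.cong)
  fix i assume "i \<in> {..<n}"
  thus "scaleC (\<alpha> i) (b i h) = scaleC (\<beta> i) (b i h)"
    using assms[of i] by (cases "b i = (\<lambda>h. 0)") auto
qed simp

lemma good_sa: "good a \<Longrightarrow> cstar a = a" by (simp add: good_def)
lemma good_mr: "good a \<Longrightarrow> i < n \<Longrightarrow> b i \<noteq> (\<lambda>h. 0) \<Longrightarrow> \<omega> i (x * a) = \<omega> i x * \<omega> i a"
  by (simp add: good_def)
lemma good_ml: "good a \<Longrightarrow> i < n \<Longrightarrow> b i \<noteq> (\<lambda>h. 0) \<Longrightarrow> \<omega> i (a * x) = \<omega> i a * \<omega> i x"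
  by (simp add: good_def)
lemma good_b: "good a \<Longrightarrow> i < n \<Longrightarrow> b i (\<phi> a h) = scaleC (\<omega> i a) (b i h)"
  by (simp add: good_def)
lemma good_real: "good a \<Longrightarrow> i < n \<Longrightarrow> cnj (\<omega> i a) = \<omega> i a"
  using st_sa_real[OF states good_sa] by (simp add: complex_eq_iff)

lemma good_phi_b:
  assumes g: "good a" and i: "i < n"
  shows "\<phi> a (b i h) = scaleC (\<omega> i a) (b i h)"
proof (rule ci_ext_left)
  fix y
  have "cinner (\<phi> a (b i h)) y = cinner (b i h) (\<phi> a y)" by (rule phi_sa[OF good_sa[OF g]])
  also have "\<dots> = cinner h (b i (\<phi> a y))" by (rule bsa[OF i])
  also have "\<dots> = \<omega> i a * cinner h (b i y)" by (simp add: good_b[OF g i] ci_sC_right)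
  also have "\<dots> = cinner (scaleC (\<omega> i a) (b i h)) y"
    by (simp add: cinner_scaleC_left good_real[OF g i] bsa[OF i])
  finally show "cinner (\<phi> a (b i h)) y = cinner (scaleC (\<omega> i a) (b i h)) y" .
qed

lemma good_comm:
  assumes g: "good a"
  shows "\<phi> a (\<phi> x h) = \<phi> x (\<phi> a h)"
proof -
  have "\<phi> a (\<phi> x h) = (\<Sum>i<n. scaleC (\<omega> i x) (\<phi> a (b i h)))" by (rule phi_lin_h[OF phi_bop])
  also have "\<dots> = (\<Sum>i<n. scaleC (\<omega> i x) (b i (\<phi> a h)))"
    by (rule sum.cong) (auto simp: good_phi_b[OF g] good_b[OF g])
  also have "\<dots> = \<phi> x (\<phi> a h)" by (simp add: phi_h)
  finally show ?thesis .
qed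

lemma good_prod:
  assumes g: "good a" and c: "good c"
  shows "\<phi> a (\<phi> c h) = \<phi> (a * c) h"
proof -
  have "\<phi> a (\<phi> c h) = (\<Sum>i<n. scaleC (\<omega> i a) (b i (\<phi> c h)))" by (rule phi_h)
  also have "\<dots> = (\<Sum>i<n. scaleC (\<omega> i a * \<omega> i c) (b i h))"
    by (rule sum.cong) (auto simp: good_b[OF c] scaleC_scaleC)
  also have "\<dots> = (\<Sum>i<n. scaleC (\<omega> i (a * c)) (b i h))"
    by (rule bsum_cong) (simp add: good_ml[OF g])
  also have "\<dots> = \<phi> (a * c) h" by (simp add: phi_h)
  finally show ?thesis .
qed

lemma good_aXa:
  assumes g: "good a"
  shows "\<phi> a (\<phi> x (\<phi> a h)) = \<phi> (a * x * a) h"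
proof -
  have "\<phi> x (\<phi> a h) = (\<Sum>i<n. scaleC (\<omega> i x) (b i (\<phi> a h)))" by (rule phi_h)
  also have "\<dots> = (\<Sum>i<n. scaleC (\<omega> i x * \<omega> i a) (b i h))"
    by (rule sum.cong) (auto simp: good_b[OF g] scaleC_scaleC)
  finally have 1: "\<phi> x (\<phi> a h) = (\<Sum>i<n. scaleC (\<omega> i x * \<omega> i a) (b i h))" .
  have "\<phi> a (\<phi> x (\<phi> a h)) = (\<Sum>i<n. scaleC (\<omega> i x * \<omega> i a) (\<phi> a (b i h)))"
    unfolding 1 by (simp add: bop_sum_h[OF phi_bop] bop_sC_h[OF phi_bop])
  also have "\<dots> = (\<Sum>i<n. scaleC (\<omega> i x * \<omega> i a * \<omega> i a) (b i h))"
    by (rule sum.cong) (auto simp: good_phi_b[OF g] scaleC_scaleC)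
  also have "\<dots> = (\<Sum>i<n. scaleC (\<omega> i (a * x * a)) (b i h))"
    by (rule bsum_cong) (simp add: good_ml[OF g] good_mr[OF g] mult.commute mult.left_commute)
  also have "\<dots> = \<phi> (a * x * a) h" by (simp add: phi_h)
  finally show ?thesis .
qed

lemma good_zero: "good 0"
  unfolding good_def by (simp add: st_zero[OF states] phi_zero_h bop_zero_h[OF bb])
lemma good_one: "good 1"
  unfolding good_def by (simp add: st_one[OF states] unital)

lemma good_add:
  assumes g: "good a" and c: "good c"
  shows "good (a + c)"
  unfolding good_def
  using good_sa[OF g] good_sa[OF c] good_ml[OF g] good_mr[OF g] good_ml[OF c] good_mr[OF c] good_b[OF g] good_b[OF c]
  by (simp add: cstar_add st_add[OF states] distrib_left distrib_right phi_add_h bop_add_h[OF bb]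
      scaleC_add_left)

lemma good_scaleR:
  assumes g: "good a"
  shows "good (scaleR r a)"
proof -
  have "good (scaleC (complex_of_real r) a)"
    unfolding good_def
    using good_sa[OF g] good_ml[OF g] good_mr[OF g] good_b[OF g]
    by (simp add: cstar_scaleC st_sC[OF states] phi_sC_h bop_sC_h[OF bb] scaleC_mult_left mult_scaleC_right
      scaleC_scaleC mult.commute mult.left_commute)
  thus ?thesis by (simp add: scaleR_scaleC)
qed

lemma good_minus: "good a \<Longrightarrow> good (- a)"
  using good_scaleR[of a "-1"] by simp
lemma good_diff: "good a \<Longrightarrow> good c \<Longrightarrow> good (a - c)"
  using good_add[of a "-c"] good_minus[of c] by simp

definition jor where "jor a c = scaleR (1/2) (a * c + c * a)"

lemma phi_jor:
  assumes g: "good a" and c: "good c"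
  shows "\<phi> (jor a c) h = \<phi> (a * c) h"
proof -
  have "\<phi> (c * a) h = \<phi> (a * c) h"
    using good_prod[OF c g, of h] good_prod[OF g c, of h] good_comm[OF g, of c h] by simp
  thus ?thesis unfolding jor_def by (simp add: phi_scaleR_h phi_add_h scaleR_add_right[symmetric])
qed

lemma good_jor:
  assumes g: "good a" and c: "good c"
  shows "good (jor a c)"
proof -
  have s: "cstar (jor a c) = jor a c"
    unfolding jor_def by (simp add: cs_scaleR cstar_add cstar_mult good_sa[OF g] good_sa[OF c] add.commute)
  have wj: "\<omega> i (jor a c) = \<omega> i a * \<omega> i c" if i: "i < n" "b i \<noteq> (\<lambda>h. 0)" for i
    unfolding jor_def using good_ml[OF g i] good_ml[OF c i]
    by (simp add: st_scaleR[OF states[OF i(1)]] st_add[OF states[OF i(1)]] mult.commute)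
  have m: "\<forall>x. \<omega> i (x * jor a c) = \<omega> i x * \<omega> i (jor a c) \<and> \<omega> i (jor a c * x) = \<omega> i (jor a c) * \<omega> i x"
    if i: "i < n" "b i \<noteq> (\<lambda>h. 0)" for i
  proof -
    have "\<omega> i (x * (a * c)) = \<omega> i x * (\<omega> i a * \<omega> i c)" for x
      using good_mr[OF g i, of "x"] good_mr[OF c i, of "x * a"] by (simp add: mult.assoc[symmetric])
    moreover have "\<omega> i (x * (c * a)) = \<omega> i x * (\<omega> i a * \<omega> i c)" for x
      using good_mr[OF c i, of "x"] good_mr[OF g i, of "x * c"] by (simp add: mult.assoc[symmetric])
    moreover have "\<omega> i ((a * c) * x) = (\<omega> i a * \<omega> i c) * \<omega> i x" for x
      using good_ml[OF g i, of "c * x"] good_ml[OF c i, of "x"] by (simp add: mult.assoc)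
    moreover have "\<omega> i ((c * a) * x) = (\<omega> i a * \<omega> i c) * \<omega> i x" for x
      using good_ml[OF c i, of "a * x"] good_ml[OF g i, of "x"] by (simp add: mult.assoc)
    ultimately show ?thesis unfolding wj[OF i] unfolding jor_def
      by (simp add: st_scaleR[OF states[OF i(1)]] st_add[OF states[OF i(1)]] distrib_left distrib_right
          scaleR_left_commute algebra_simps)
  qed
  have bj: "b i (\<phi> (jor a c) h) = scaleC (\<omega> i (jor a c)) (b i h)" if i: "i < n" for i h
  proof (cases "b i = (\<lambda>h. 0)")
    case True thus ?thesis by simp
  next
    case False
    have "b i (\<phi> (jor a c) h) = b i (\<phi> a (\<phi> c h))" by (simp add: phi_jor[OF g c] good_prod[OF g c])
    also have "\<dots> = scaleC (\<omega> i a * \<omega> i c) (b i h)" by (simp add: good_b[OF g i] good_b[OF c i] bop_sC_h[OF bb[OF i]] scaleC_scaleC)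
    finally show ?thesis using wj[OF i False] by simp
  qed
  show ?thesis unfolding good_def using s m bj by blast
qed

end


lemma fin_closed:
  fixes L :: "(nat \<Rightarrow> complex) set"
  assumes z: "(\<lambda>i. 0) \<in> L"
    and ad: "\<And>u v. u \<in> L \<Longrightarrow> v \<in> L \<Longrightarrow> (\<lambda>i. u i + v i) \<in> L"
    and sc: "\<And>c u. u \<in> L \<Longrightarrow> (\<lambda>i. c * u i) \<in> L"
    and supp: "\<And>u i. u \<in> L \<Longrightarrow> N \<le> i \<Longrightarrow> u i = 0"
    and f: "\<And>k. f k \<in> L"
    and lim: "\<And>i. (\<lambda>k. f k i) \<longlonglongrightarrow> g i"
  shows "g \<in> L"
  using z ad sc supp f lim
proof (induct N arbitrary: L f g)
  case 0
  have "f k i = 0" for k i using "0.prems"(4)[OF "0.prems"(5)[of k]] by simp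
  hence "(\<lambda>k. f k i) \<longlonglongrightarrow> 0" for i by simp
  hence "g i = 0" for i using "0.prems"(6)[of i] LIMSEQ_unique by blast
  hence "g = (\<lambda>i. 0)" by auto
  thus ?case using "0.prems"(1) by simp
next
  case (Suc N)
  note P = Suc.prems
  show ?case
  proof (cases "\<exists>u\<in>L. u N \<noteq> 0")
    case False
    have supp': "\<And>u i. u \<in> L \<Longrightarrow> N \<le> i \<Longrightarrow> u i = 0"
      using False P(4) by (metis le_antisym not_less_eq_eq)
    show ?thesis
      apply (rule Suc.hyps[of L f g])
      apply (rule P(1))
      apply (erule (1) P(2))
      apply (erule P(3))
      apply (erule (1) supp')
      apply (rule P(5))
      apply (rule P(6))
      done
  next
    case True
    then obtain u where u: "u \<in> L" "u N \<noteq> 0" by blast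
    define u' where "u' = (\<lambda>i. (1 / u N) * u i)"
    have u'L: "u' \<in> L" unfolding u'_def by (rule P(3)[OF u(1)])
    have u'N: "u' N = 1" using u(2) by (simp add: u'_def)
    define L' where "L' = {v \<in> L. v N = 0}"
    define f' where "f' k = (\<lambda>i. f k i + (- f k N) * u' i)" for k
    define g' where "g' = (\<lambda>i. g i + (- g N) * u' i)"
    have "g' \<in> L'"
    proof (rule Suc.hyps)
      show "(\<lambda>i. 0) \<in> L'" using P(1) by (simp add: L'_def)
      show "(\<lambda>i. v i + w i) \<in> L'" if "v \<in> L'" "w \<in> L'" for v w
        using that P(2) by (auto simp: L'_def)
      show "(\<lambda>i. c * v i) \<in> L'" if "v \<in> L'" for c v
        using that P(3) by (auto simp: L'_def)
      show "v i = 0" if "v \<in> L'" "N \<le> i" for v i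
        using that P(4)[of v i] by (cases "i = N") (auto simp: L'_def)
      show "f' k \<in> L'" for k
        using P(2)[OF P(5)[of k] P(3)[OF u'L, of "- f k N"]] u'N by (simp add: L'_def f'_def)
      show "(\<lambda>k. f' k i) \<longlonglongrightarrow> g' i" for i
        unfolding f'_def g'_def by (intro tendsto_intros P(6))
    qed
    hence "(\<lambda>i. g' i + g N * u' i) \<in> L" using P(2) P(3)[OF u'L] by (simp add: L'_def)
    moreover have "(\<lambda>i. g' i + g N * u' i) = g" by (auto simp: g'_def)
    ultimately show ?thesis by simp
  qed
qed

lemma coef_conv:
  fixes v :: "'h::chilbert_space"
  assumes v: "v \<noteq> 0" and c: "(\<lambda>k. scaleC (c k) v) \<longlonglongrightarrow> w"
  shows "\<exists>m. c \<longlonglongrightarrow> m"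
proof -
  have C: "Cauchy (\<lambda>k. scaleC (c k) v)" by (rule LIMSEQ_imp_Cauchy[OF c])
  have nv: "norm v > 0" using v by simp
  have "Cauchy c"
  proof (rule metric_CauchyI)
    fix e :: real assume e: "e > 0"
    obtain M where M: "\<forall>m\<ge>M. \<forall>k\<ge>M. dist (scaleC (c m) v) (scaleC (c k) v) < e * norm v"
      using metric_CauchyD[OF C, of "e * norm v"] e nv by auto
    have "dist (c m) (c k) < e" if "m \<ge> M" "k \<ge> M" for m k
    proof -
      have "dist (scaleC (c m) v) (scaleC (c k) v) = cmod (c m - c k) * norm v"
        by (simp add: dist_norm sC_diff_left[symmetric] norm_scaleC)
      moreover have "dist (scaleC (c m) v) (scaleC (c k) v) < e * norm v" using M that by blast
      ultimately have "cmod (c m - c k) * norm v < e * norm v" by simp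
      thus ?thesis using nv by (simp add: dist_norm)
    qed
    thus "\<exists>M. \<forall>m\<ge>M. \<forall>n\<ge>M. dist (c m) (c n) < e" by blast
  qed
  thus ?thesis using Cauchy_convergent_iff convergent_def by blast
qed

lemma sC_decomp:
  "scaleC c (a + scaleC \<i> d) =
    (scaleR (Re c) a - scaleR (Im c) d) + scaleC \<i> (scaleR (Im c) a + scaleR (Re c) (d::'a::complex_vector))"
proof -
  have "(scaleR (Re c) a - scaleR (Im c) d) + scaleC \<i> (scaleR (Im c) a + scaleR (Re c) d)
     = scaleC (of_real (Re c) + \<i> * of_real (Im c)) a + scaleC (\<i> * of_real (Re c) - of_real (Im c)) d"
    by (simp add: scaleR_scaleC scaleC_add_right scaleC_scaleC scaleC_add_left sC_diff_left)
  also have "of_real (Re c) + \<i> * of_real (Im c) = c" by (simp add: complex_eq_iff)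
  also have "\<i> * of_real (Re c) - of_real (Im c) = c * \<i>" by (simp add: complex_eq_iff)
  finally show ?thesis by (simp add: scaleC_add_right scaleC_scaleC)
qed

context stp begin

lemma good_proj_w:
  assumes g: "good p" and pp: "p * p = p" and i: "i < n" "b i \<noteq> (\<lambda>h. 0)"
  shows "\<omega> i (p * x * p) = \<omega> i p * \<omega> i x"
proof -
  have "\<omega> i p * \<omega> i p = \<omega> i p" using good_ml[OF g i, of p] pp by simp
  moreover have "\<omega> i (p * x * p) = \<omega> i p * \<omega> i x * \<omega> i p" using good_ml[OF g i] good_mr[OF g i] by simp
  ultimately show ?thesis by (metis mult.commute mult.assoc)
qed

lemma decomp:
  assumes g: "good e" and ee: "e * e = e"
  shows "\<phi> x h = \<phi> (e * x * e) h + \<phi> ((1 - e) * x * (1 - e)) h"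
proof -
  have gf: "good (1 - e)" by (rule good_diff[OF good_one g])
  have ff: "(1 - e) * (1 - e) = 1 - e" using ee by (simp add: algebra_simps)
  have "\<phi> (e * x * e) h + \<phi> ((1 - e) * x * (1 - e)) h
     = (\<Sum>i<n. scaleC (\<omega> i (e * x * e) + \<omega> i ((1 - e) * x * (1 - e))) (b i h))"
    by (simp add: phi_h sum.distrib scaleC_add_left)
  also have "\<dots> = (\<Sum>i<n. scaleC (\<omega> i x) (b i h))"
  proof (rule bsum_cong)
    fix i assume i: "i < n" "b i \<noteq> (\<lambda>h. 0)"
    have A: "\<omega> i (e * x * e) = \<omega> i e * \<omega> i x" by (rule good_proj_w[OF g ee i])
    have B: "\<omega> i ((1 - e) * x * (1 - e)) = \<omega> i (1 - e) * \<omega> i x" by (rule good_proj_w[OF gf ff i])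
    have C: "\<omega> i (1 - e) = 1 - \<omega> i e" by (simp add: st_diff[OF states[OF i(1)]] st_one[OF states[OF i(1)]])
    show "\<omega> i (e * x * e) + \<omega> i ((1 - e) * x * (1 - e)) = \<omega> i x"
      unfolding A B C by (simp add: algebra_simps)
  qed
  finally show ?thesis by (simp add: phi_h)
qed

definition M0 where "M0 = {a + scaleC \<i> c | a c. good a \<and> good c}"

lemma M0_I: "good a \<Longrightarrow> good c \<Longrightarrow> a + scaleC \<i> c \<in> M0" unfolding M0_def by blast
lemma M0_E: "z \<in> M0 \<Longrightarrow> (\<And>a c. good a \<Longrightarrow> good c \<Longrightarrow> z = a + scaleC \<i> c \<Longrightarrow> P) \<Longrightarrow> P"
  unfolding M0_def by blast
lemma good_M0: "good a \<Longrightarrow> a \<in> M0" using M0_I[OF _ good_zero, of a] by simp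

lemma phi_M0: "\<phi> (a + scaleC \<i> c) h = \<phi> a h + scaleC \<i> (\<phi> c h)"
  by (simp add: phi_add_h phi_sC_h)

lemma M0_b:
  assumes z: "z \<in> M0" and i: "i < n"
  shows "b i (\<phi> z h) = scaleC (\<omega> i z) (b i h)"
  using z
proof (rule M0_E)
  fix a c assume g: "good a" "good c" and ze: "z = a + scaleC \<i> c"
  show ?thesis unfolding ze phi_M0
    by (simp add: bop_add_h[OF bb[OF i]] bop_sC_h[OF bb[OF i]] good_b[OF g(1) i] good_b[OF g(2) i]
        st_add[OF states[OF i]] st_sC[OF states[OF i]] scaleC_add_left scaleC_scaleC)
qed

lemma M0_comm:
  assumes z: "z \<in> M0"
  shows "\<phi> z (\<phi> x h) = \<phi> x (\<phi> z h)"
  using z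
proof (rule M0_E)
  fix a c assume g: "good a" "good c" and ze: "z = a + scaleC \<i> c"
  show ?thesis unfolding ze phi_M0
    by (simp add: good_comm[OF g(1)] good_comm[OF g(2)] bop_add_h[OF phi_bop] bop_sC_h[OF phi_bop])
qed

lemma M0_add: "z \<in> M0 \<Longrightarrow> w \<in> M0 \<Longrightarrow> z + w \<in> M0"
proof -
  assume z: "z \<in> M0" and w: "w \<in> M0"
  obtain a c where g: "good a" "good c" and ze: "z = a + scaleC \<i> c" using z by (rule M0_E)
  obtain a' c' where g': "good a'" "good c'" and we: "w = a' + scaleC \<i> c'" using w by (rule M0_E)
  have "z + w = (a + a') + scaleC \<i> (c + c')" by (simp add: ze we scaleC_add_right algebra_simps)
  thus ?thesis using M0_I[OF good_add[OF g(1) g'(1)] good_add[OF g(2) g'(2)]] by simp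
qed

lemma M0_zero: "0 \<in> M0" using good_M0[OF good_zero] .

lemma M0_sC: "z \<in> M0 \<Longrightarrow> scaleC c z \<in> M0"
proof -
  assume z: "z \<in> M0"
  obtain a d where g: "good a" "good d" and ze: "z = a + scaleC \<i> d" using z by (rule M0_E)
  show ?thesis unfolding ze sC_decomp
    by (intro M0_I good_add good_diff good_scaleR g)
qed

lemma M0_comp:
  assumes z: "z \<in> M0" and w: "w \<in> M0"
  shows "\<exists>u\<in>M0. \<phi> z \<circ> \<phi> w = \<phi> u"
proof -
  obtain a c where g: "good a" "good c" and ze: "z = a + scaleC \<i> c" using z by (rule M0_E)
  obtain a' c' where g': "good a'" "good c'" and we: "w = a' + scaleC \<i> c'" using w by (rule M0_E)
  define u where "u = (jor a a' - jor c c') + scaleC \<i> (jor a c' + jor c a')"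
  have uM: "u \<in> M0" unfolding u_def
    by (intro M0_I good_add good_diff good_jor g g')
  have "(\<phi> z \<circ> \<phi> w) h = \<phi> u h" for h
  proof -
    have "(\<phi> z \<circ> \<phi> w) h = \<phi> a (\<phi> a' h) + scaleC \<i> (\<phi> a (\<phi> c' h)) + scaleC \<i> (\<phi> c (\<phi> a' h))
        - \<phi> c (\<phi> c' h)"
      unfolding ze we by (simp add: phi_M0 bop_add_h[OF phi_bop] bop_sC_h[OF phi_bop] scaleC_add_right
          scaleC_scaleC sC_minus_left algebra_simps)
    also have "\<dots> = \<phi> u h"
      unfolding u_def by (simp add: phi_M0 phi_add_h phi_diff_h phi_sC_h phi_jor g g' good_prod scaleC_add_right algebra_simps)
    finally show ?thesis .
  qed
  thus ?thesis using uM by blast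
qed

definition Cset where "Cset = \<phi> ` M0"

end

context stp begin
lemma Cset_closed:
  assumes Ts: "\<And>k. Ts k \<in> Cset" and T: "bounded_op T"
    and lim: "(\<lambda>k. onorm (\<lambda>x. Ts k x - T x)) \<longlonglongrightarrow> 0"
  shows "T \<in> Cset"
proof -
  have "\<forall>k. \<exists>u. u \<in> M0 \<and> Ts k = \<phi> u" using Ts unfolding Cset_def by blast
  hence "\<exists>z. \<forall>k. z k \<in> M0 \<and> Ts k = \<phi> (z k)" by (rule choice)
  then obtain z where zM: "\<And>k. z k \<in> M0" and zT: "\<And>k. Ts k = \<phi> (z k)" by blast
  define act where "act i \<longleftrightarrow> i < n \<and> b i \<noteq> (\<lambda>h. 0)" for i
  define cv where "cv u = (\<lambda>i. if act i then \<omega> i u else 0)" for u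
  define L where "L = cv ` M0"
  have pw: "(\<lambda>k. Ts k h) \<longlonglongrightarrow> T h" for h
  proof -
    have bl: "bounded_linear (\<lambda>x. Ts k x - T x)" for k
    proof -
      have "bounded_op (Ts k)" using zT phi_bop by simp
      hence "bounded_op (\<lambda>x. Ts k x + scaleC (-1) (T x))" by (rule bop_add[OF _ bop_sC[OF T]])
      hence "bounded_linear (\<lambda>x. Ts k x + scaleC (-1) (T x))" by (rule bop_bounded_linear)
      thus ?thesis by (simp add: sC_minus_left)
    qed
    have "(\<lambda>k. onorm (\<lambda>x. Ts k x - T x) * norm h) \<longlonglongrightarrow> 0 * norm h" by (rule tendsto_mult[OF lim tendsto_const])
    hence l0: "(\<lambda>k. onorm (\<lambda>x. Ts k x - T x) * norm h) \<longlonglongrightarrow> 0" by simp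
    have e: "\<forall>k. norm (Ts k h - T h) \<le> onorm (\<lambda>x. Ts k x - T x) * norm h"
      using onorm[OF bl] by simp
    have "(\<lambda>k. Ts k h - T h) \<longlonglongrightarrow> 0"
      by (rule Lim_null_comparison[OF always_eventually[OF e] l0])
    thus ?thesis by (rule LIM_zero_cancel)
  qed
  have lims: "\<exists>m. (\<lambda>k. cv (z k) i) \<longlonglongrightarrow> m \<and> (i < n \<longrightarrow> (\<forall>h. b i (T h) = scaleC m (b i h)))" for i
  proof (cases "act i")
    case False
    have "cv (z k) i = 0" for k using False by (simp add: cv_def)
    moreover have "i < n \<Longrightarrow> b i (T h) = scaleC 0 (b i h)" for h using False by (simp add: act_def)
    ultimately show ?thesis by auto
  next
    case True
    hence i: "i < n" and nz: "b i \<noteq> (\<lambda>h. 0)" by (auto simp: act_def)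
    have bc: "isCont (b i) x" for x
      by (rule linear_continuous_at[OF bop_bounded_linear[OF bb[OF i]]])
    have conv: "(\<lambda>k. scaleC (cv (z k) i) (b i h)) \<longlonglongrightarrow> b i (T h)" for h
    proof -
      have "(\<lambda>k. b i (Ts k h)) \<longlonglongrightarrow> b i (T h)" by (rule isCont_tendsto_compose[OF bc pw])
      thus ?thesis using True by (simp add: zT M0_b[OF zM i] cv_def)
    qed
    obtain h0 where h0: "b i h0 \<noteq> 0" using nz by auto
    obtain m where m: "(\<lambda>k. cv (z k) i) \<longlonglongrightarrow> m" using coef_conv[OF h0 conv] by blast
    have "b i (T h) = scaleC m (b i h)" for h
      using LIMSEQ_unique[OF conv[of h] tendsto_sC[OF m tendsto_const]] by simp
    thus ?thesis using m by blast
  qed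
  hence "\<exists>g. \<forall>i. (\<lambda>k. cv (z k) i) \<longlonglongrightarrow> g i \<and> (i < n \<longrightarrow> (\<forall>h. b i (T h) = scaleC (g i) (b i h)))"
    by (intro choice) blast
  then obtain g where g: "\<And>i. (\<lambda>k. cv (z k) i) \<longlonglongrightarrow> g i"
      and gb: "\<And>i h. i < n \<Longrightarrow> b i (T h) = scaleC (g i) (b i h)"
    by blast
  have "g \<in> L"
  proof (rule fin_closed[where N = n])
    have "cv 0 = (\<lambda>i. 0)" by (auto simp: cv_def st_zero[OF states] act_def)
    thus "(\<lambda>i. 0) \<in> L" unfolding L_def using M0_zero by (metis rev_image_eqI)
    show "(\<lambda>i. u i + v i) \<in> L" if uv: "u \<in> L" "v \<in> L" for u v
    proof -
      obtain p q where "p \<in> M0" "q \<in> M0" "u = cv p" "v = cv q" using uv unfolding L_def by blast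
      moreover have "cv (p + q) = (\<lambda>i. cv p i + cv q i)"
        by (auto simp: cv_def act_def st_add[OF states])
      ultimately show ?thesis unfolding L_def using M0_add by (metis rev_image_eqI)
    qed
    show "(\<lambda>i. c * u i) \<in> L" if uL: "u \<in> L" for c u
    proof -
      obtain p where "p \<in> M0" "u = cv p" using uL unfolding L_def by blast
      moreover have "cv (scaleC c p) = (\<lambda>i. c * cv p i)"
        by (auto simp: cv_def act_def st_sC[OF states])
      ultimately show ?thesis unfolding L_def using M0_sC by (metis rev_image_eqI)
    qed
    show "u i = 0" if "u \<in> L" "n \<le> i" for u i
      using that unfolding L_def by (auto simp: cv_def act_def)
    show "(\<lambda>i. cv (z k) i) \<in> L" for k unfolding L_def using zM by auto
    show "(\<lambda>k. cv (z k) i) \<longlonglongrightarrow> g i" for i by (rule g)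
  qed
  then obtain u where uM: "u \<in> M0" and gu: "g = cv u" unfolding L_def by blast
  have "T h = \<phi> u h" for h
  proof -
    have "T h = (\<Sum>i<n. b i (T h))" by (simp add: sumb)
    also have "\<dots> = (\<Sum>i<n. scaleC (g i) (b i h))" by (rule sum.cong) (auto simp: gb)
    also have "\<dots> = (\<Sum>i<n. scaleC (\<omega> i u) (b i h))"
      by (rule bsum_cong) (simp add: gu cv_def act_def)
    also have "\<dots> = \<phi> u h" by (simp add: phi_h)
    finally show ?thesis .
  qed
  hence "T = \<phi> u" by auto
  thus ?thesis using uM unfolding Cset_def by blast
qed

end


context stp begin

lemma Cset_E: "T \<in> Cset \<Longrightarrow> (\<And>a c. good a \<Longrightarrow> good c \<Longrightarrow> T = \<phi> (a + scaleC \<i> c) \<Longrightarrow> P) \<Longrightarrow> P"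
  unfolding Cset_def by (auto elim: M0_E)

lemma Cset_sub: "op_cstar_subalgebra Cset"
  unfolding op_cstar_subalgebra_def
proof (intro conjI ballI allI impI)
  show "bounded_op T" if "T \<in> Cset" for T using that unfolding Cset_def using phi_bop by auto
  show "(\<lambda>x. 0) \<in> Cset" unfolding Cset_def using M0_zero phi_zero by (metis rev_image_eqI)
  show "(\<lambda>x. S x + T x) \<in> Cset" if ST: "S \<in> Cset" "T \<in> Cset" for S T
  proof -
    obtain z w where "z \<in> M0" "w \<in> M0" "S = \<phi> z" "T = \<phi> w" using ST unfolding Cset_def by blast
    moreover have "(\<lambda>x. \<phi> z x + \<phi> w x) = \<phi> (z + w)" by (simp add: add)
    ultimately show ?thesis unfolding Cset_def using M0_add by (metis rev_image_eqI)
  qed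
  show "S \<circ> T \<in> Cset" if ST: "S \<in> Cset" "T \<in> Cset" for S T
  proof -
    obtain z w where "z \<in> M0" "w \<in> M0" "S = \<phi> z" "T = \<phi> w" using ST unfolding Cset_def by blast
    thus ?thesis unfolding Cset_def using M0_comp by blast
  qed
  show "(\<lambda>x. scaleC c (T x)) \<in> Cset" if TC: "T \<in> Cset" for c T
  proof -
    obtain z where "z \<in> M0" "T = \<phi> z" using TC unfolding Cset_def by blast
    moreover have "(\<lambda>x. scaleC c (\<phi> z x)) = \<phi> (scaleC c z)" by (simp add: scal)
    ultimately show ?thesis unfolding Cset_def using M0_sC by (metis rev_image_eqI)
  qed
  show "\<exists>S\<in>Cset. \<forall>x y. cinner (T x) y = cinner x (S y)" if "T \<in> Cset" for T
    using that
  proof (rule Cset_E)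
    fix a c assume g: "good a" "good c" and T: "T = \<phi> (a + scaleC \<i> c)"
    have SC: "\<phi> (a + scaleC \<i> (- c)) \<in> Cset" unfolding Cset_def
      using M0_I[OF g(1) good_minus[OF g(2)]] by blast
    have "cinner (T x) y = cinner x (\<phi> (a + scaleC \<i> (- c)) y)" for x y
      unfolding T phi_M0
      by (simp add: cinner_add_left ci_add_right cinner_scaleC_left ci_sC_right phi_minus_h ci_minus_right
          phi_sa[OF good_sa[OF g(1)]] phi_sa[OF good_sa[OF g(2)]])
    thus ?thesis using SC by blast
  qed
  show "T \<in> Cset" if "(\<forall>n. Ts n \<in> Cset) \<and> bounded_op T \<and> (\<lambda>n. onorm (\<lambda>x. Ts n x - T x)) \<longlonglongrightarrow> 0" for T Ts
    by (rule Cset_closed[of Ts T]) (use that in auto)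
qed

lemma Cset_comm_range: "T \<in> Cset \<Longrightarrow> T \<circ> \<phi> x = \<phi> x \<circ> T"
proof -
  assume "T \<in> Cset"
  then obtain z where z: "z \<in> M0" "T = \<phi> z" unfolding Cset_def by blast
  show ?thesis
  proof
    fix h show "(T \<circ> \<phi> x) h = (\<phi> x \<circ> T) h" using M0_comm[OF z(1)] z(2) by simp
  qed
qed

lemma Cset_comm: "S \<in> Cset \<Longrightarrow> T \<in> Cset \<Longrightarrow> S \<circ> T = T \<circ> S"
proof -
  assume S: "S \<in> Cset" and T: "T \<in> Cset"
  then obtain w where "T = \<phi> w" unfolding Cset_def by blast
  thus ?thesis using Cset_comm_range[OF S, of w] by simp
qed

lemma Cset_sa: "\<phi> ` definite_set \<phi> = {T \<in> Cset. op_selfadjoint T}"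
proof
  show "\<phi> ` definite_set \<phi> \<subseteq> {T \<in> Cset. op_selfadjoint T}"
    unfolding D_eq Cset_def using good_M0 phi_op_sa good_sa by blast
  show "{T \<in> Cset. op_selfadjoint T} \<subseteq> \<phi> ` definite_set \<phi>"
  proof clarify
    fix T assume TC: "T \<in> Cset" and sa: "op_selfadjoint T"
    from TC show "T \<in> \<phi> ` definite_set \<phi>"
    proof (rule Cset_E)
      fix a c assume g: "good a" "good c" and T: "T = \<phi> (a + scaleC \<i> c)"
      have z: "\<phi> c x = 0" for x
      proof (rule ci_ext_left)
        fix y
        have "cinner (T x) y = cinner x (T y)" using sa by (simp add: op_selfadjoint_def)
        hence "cinner (\<phi> a x) y - \<i> * cinner (\<phi> c x) y = cinner (\<phi> a x) y + \<i> * cinner (\<phi> c x) y"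
          unfolding T phi_M0
          by (simp add: cinner_add_left ci_add_right cinner_scaleC_left ci_sC_right
              phi_sa[OF good_sa[OF g(1)]] phi_sa[OF good_sa[OF g(2)]])
        hence "cinner (\<phi> c x) y = 0" by simp
        thus "cinner (\<phi> c x) y = cinner 0 y" by simp
      qed
      have "T = \<phi> a" unfolding T using z by (auto simp: phi_M0)
      thus ?thesis using g(1) D_eq by auto
    qed
  qed
qed

lemma Cset_center: "Cset \<subseteq> center (vN_generated (range \<phi>))"
proof
  fix T assume TC: "T \<in> Cset"
  obtain w where Tw: "T = \<phi> w" using TC unfolding Cset_def by blast
  have bT: "bounded_op T" using Tw phi_bop by simp
  have T1: "T \<in> commutant (range \<phi>)"
  proof -
    have "\<forall>X\<in>range \<phi>. T \<circ> X = X \<circ> T" using Cset_comm_range[OF TC] by blast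
    thus ?thesis unfolding commutant_def using bT by blast
  qed
  have T2: "T \<in> vN_generated (range \<phi>)"
  proof -
    have "\<forall>X\<in>commutant (range \<phi>). T \<circ> X = X \<circ> T"
    proof
      fix X assume "X \<in> commutant (range \<phi>)"
      hence "X \<circ> \<phi> w = \<phi> w \<circ> X" unfolding commutant_def by blast
      thus "T \<circ> X = X \<circ> T" using Tw by simp
    qed
    thus ?thesis unfolding vN_generated_def commutant_def using bT by blast
  qed
  have T3: "T \<in> commutant (vN_generated (range \<phi>))"
  proof -
    have "\<forall>X\<in>vN_generated (range \<phi>). T \<circ> X = X \<circ> T"
    proof
      fix X assume "X \<in> vN_generated (range \<phi>)"
      hence "X \<circ> T = T \<circ> X" using T1 unfolding vN_generated_def commutant_def by blast
      thus "T \<circ> X = X \<circ> T" by simp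
    qed
    thus ?thesis unfolding commutant_def using bT by blast
  qed
  show "T \<in> center (vN_generated (range \<phi>))" unfolding center_def using T2 T3 by blast
qed

end


definition reP :: "'a::cstar_algebra \<Rightarrow> 'a" where "reP z = scaleR (1/2) (z + cstar z)"
definition imP :: "'a::cstar_algebra \<Rightarrow> 'a" where "imP z = scaleR (1/2) (scaleC (- \<i>) (z - cstar z))"

lemma cs_M0form: "cstar a = a \<Longrightarrow> cstar c = c \<Longrightarrow> cstar (a + scaleC \<i> c) = a + scaleC \<i> (- (c::'a::cstar_algebra))"
  by (simp add: cstar_add cstar_scaleC sC_minus_left sC_minus_right)

lemma half_double: "scaleR (1/2) (x + x) = (x::'a::real_vector)"
proof -
  have "scaleR (1/2) (x + x) = scaleR (1/2 + 1/2) x" by (simp only: scaleR_add_left scaleR_add_right)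
  thus ?thesis by simp
qed

lemma re_im:
  fixes a c :: "'a::cstar_algebra"
  assumes a: "cstar a = a" and c: "cstar c = c"
  shows "reP (a + scaleC \<i> c) = a" and "imP (a + scaleC \<i> c) = c"
proof -
  have cz: "cstar (a + scaleC \<i> c) = a - scaleC \<i> c" using cs_M0form[OF a c] by (simp add: sC_minus_right)
  have "a + scaleC \<i> c + (a - scaleC \<i> c) = a + a" by (simp add: algebra_simps)
  thus "reP (a + scaleC \<i> c) = a" unfolding reP_def cz by (simp only: half_double)
  have "a + scaleC \<i> c - (a - scaleC \<i> c) = scaleC \<i> c + scaleC \<i> c" by (simp add: algebra_simps)
  moreover have "scaleC (- \<i>) (scaleC \<i> c + scaleC \<i> c) = c + c" by (simp add: scaleC_add_right scaleC_scaleC)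
  ultimately show "imP (a + scaleC \<i> c) = c" unfolding imP_def cz by (simp only: half_double)
qed

lemma re_im_decomp: "z = reP z + scaleC \<i> (imP (z::'a::cstar_algebra))"
proof -
  have "scaleC \<i> (imP z) = scaleR (1/2) (z - cstar z)"
    unfolding imP_def by (simp add: scaleR_scaleC scaleC_scaleC)
  hence "reP z + scaleC \<i> (imP z) = scaleR (1/2) ((z + cstar z) + (z - cstar z))"
    unfolding reP_def by (simp only: scaleR_add_right)
  also have "(z + cstar z) + (z - cstar z) = z + z" by (simp add: algebra_simps)
  finally show ?thesis by (simp only: half_double)
qed

lemma reP_tendsto: "z \<longlonglongrightarrow> l \<Longrightarrow> (\<lambda>k. reP (z k)) \<longlonglongrightarrow> reP (l::'a::cstar_algebra)"
  unfolding reP_def by (intro tendsto_scaleR tendsto_const tendsto_add bounded_linear.tendsto[OF cs_bounded_linear])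
lemma imP_tendsto: "z \<longlonglongrightarrow> l \<Longrightarrow> (\<lambda>k. imP (z k)) \<longlonglongrightarrow> imP (l::'a::cstar_algebra)"
  unfolding imP_def by (intro tendsto_scaleR tendsto_const tendsto_sC tendsto_diff bounded_linear.tendsto[OF cs_bounded_linear])

lemma prod_M0form:
  "(a + scaleC \<i> c) * (a' + scaleC \<i> c') = (a * a' - c * c') + scaleC \<i> (a * c' + c * (a'::'a::cstar_algebra))"
  by (simp add: distrib_left distrib_right scaleC_mult_left mult_scaleC_right scaleC_scaleC
      scaleC_add_right sC_minus_left algebra_simps)

context stp begin

lemma w_tendsto:
  assumes s: "\<And>k. cstar (g k) = g k" and l: "cstar l = l" and g: "g \<longlonglongrightarrow> l" and i: "i < n"
  shows "(\<lambda>k. \<omega> i (g k)) \<longlonglongrightarrow> \<omega> i l"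
proof -
  have e: "\<forall>k. norm (\<omega> i (g k) - \<omega> i l) \<le> norm (g k - l)"
  proof
    fix k
    have "cstar (g k - l) = g k - l" by (simp add: cs_diff s l)
    hence "cmod (\<omega> i (g k - l)) \<le> norm (g k - l)" by (rule st_bound[OF states[OF i]])
    thus "norm (\<omega> i (g k) - \<omega> i l) \<le> norm (g k - l)" by (simp add: st_diff[OF states[OF i]])
  qed
  have "(\<lambda>k. norm (g k - l)) \<longlonglongrightarrow> 0" using g by (simp add: LIM_zero_iff tendsto_norm_zero)
  hence "(\<lambda>k. \<omega> i (g k) - \<omega> i l) \<longlonglongrightarrow> 0" by (rule Lim_null_comparison[OF always_eventually[OF e]])
  thus ?thesis by (rule LIM_zero_cancel)
qed

lemma phi_tendsto:
  assumes s: "\<And>k. cstar (g k) = g k" and l: "cstar l = l" and g: "g \<longlonglongrightarrow> l"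
  shows "(\<lambda>k. \<phi> (g k) h) \<longlonglongrightarrow> \<phi> l h"
  unfolding phi_h by (intro tendsto_sum tendsto_sC w_tendsto[OF s l g] tendsto_const) simp

lemma good_closed:
  assumes gk: "\<And>k. good (g k)" and g: "g \<longlonglongrightarrow> l"
  shows "good l"
proof -
  have s: "cstar (g k) = g k" for k using good_sa[OF gk] .
  have "(\<lambda>k. cstar (g k)) \<longlonglongrightarrow> cstar l" by (rule bounded_linear.tendsto[OF cs_bounded_linear g])
  hence l: "cstar l = l" using g s LIMSEQ_unique by auto
  have ss: "cstar (g k * g k) = g k * g k" for k by (simp add: cstar_mult s)
  have ls: "cstar (l * l) = l * l" by (simp add: cstar_mult l)
  have "\<phi> (l * l) h = \<phi> l (\<phi> l h)" for h
  proof -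
    have 1: "(\<lambda>k. \<phi> (g k * g k) h) \<longlonglongrightarrow> \<phi> (l * l) h"
      by (rule phi_tendsto[OF ss ls tendsto_mult[OF g g]])
    have bc: "(\<lambda>k. b i (\<phi> (g k) h)) \<longlonglongrightarrow> b i (\<phi> l h)" if i: "i < n" for i
      by (rule isCont_tendsto_compose[OF linear_continuous_at[OF bop_bounded_linear[OF bb[OF i]]]
            phi_tendsto[OF s l g]])
    have 2: "(\<lambda>k. \<phi> (g k) (\<phi> (g k) h)) \<longlonglongrightarrow> \<phi> l (\<phi> l h)"
      unfolding phi_h[of "g _" "\<phi> (g _) h"] phi_h[of l "\<phi> l h"]
      by (intro tendsto_sum tendsto_sC w_tendsto[OF s l g] bc) simp_all
    have "\<phi> (g k * g k) h = \<phi> (g k) (\<phi> (g k) h)" for k using good_defin[OF gk[of k]] by simp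
    thus ?thesis using LIMSEQ_unique[OF 1] 2 by simp
  qed
  hence "\<phi> (l * l) = \<phi> l \<circ> \<phi> l" by auto
  thus ?thesis by (rule defin_good[OF l])
qed

lemma faithful_comm:
  assumes f: "faithful_map \<phi>" and g: "good a" and c: "good c"
  shows "a * c = c * a"
proof -
  let ?x = "a * c - c * a"
  have cx: "cstar ?x = c * a - a * c" by (simp add: cs_diff cstar_mult good_sa[OF g] good_sa[OF c])
  have e: "cstar ?x * ?x = c * (a * (a * c)) - c * (a * (c * a)) - a * (c * (a * c)) + a * (c * (c * a))"
    unfolding cx by (simp add: algebra_simps)
  have "\<phi> (cstar ?x * ?x) h = 0" for h
  proof -
    have "\<phi> (cstar ?x * ?x) h = (\<Sum>i<n. scaleC (\<omega> i (cstar ?x * ?x)) (b i h))" by (rule phi_h)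
    also have "\<dots> = (\<Sum>i<n. scaleC 0 (b i h))"
    proof (rule bsum_cong)
      fix i assume i: "i < n" "b i \<noteq> (\<lambda>h. 0)"
      note w = states[OF i(1)]
      show "\<omega> i (cstar ?x * ?x) = 0" unfolding e
        by (simp add: st_add[OF w] st_diff[OF w] good_ml[OF g i] good_ml[OF c i])
    qed
    finally show ?thesis by simp
  qed
  hence "\<phi> (cstar ?x * ?x) = (\<lambda>h. 0)" by auto
  hence "?x = 0" using f unfolding faithful_map_def by blast
  thus ?thesis by simp
qed

lemma good_prodc:
  assumes g: "good a" and c: "good c" and ac: "a * c = c * a"
  shows "good (a * c)"
proof -
  have s: "cstar (a * c) = a * c" by (simp add: cstar_mult good_sa[OF g] good_sa[OF c] ac)
  have m: "\<forall>x. \<omega> i (x * (a * c)) = \<omega> i x * \<omega> i (a * c) \<and> \<omega> i (a * c * x) = \<omega> i (a * c) * \<omega> i x"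
    if i: "i < n" "b i \<noteq> (\<lambda>h. 0)" for i
    using good_ml[OF g i] good_ml[OF c i] good_mr[OF g i] good_mr[OF c i]
    by (simp add: mult.assoc[symmetric]) (simp add: mult.assoc)
  have bq: "b i (\<phi> (a * c) h) = scaleC (\<omega> i (a * c)) (b i h)" if i: "i < n" for i h
  proof (cases "b i = (\<lambda>h. 0)")
    case True thus ?thesis by simp
  next
    case False
    have "b i (\<phi> (a * c) h) = b i (\<phi> a (\<phi> c h))" by (simp add: good_prod[OF g c])
    also have "\<dots> = scaleC (\<omega> i a * \<omega> i c) (b i h)"
      by (simp add: good_b[OF g i] good_b[OF c i] bop_sC_h[OF bb[OF i]] scaleC_scaleC)
    finally show ?thesis using good_ml[OF g i False, of c] by simp
  qed
  show ?thesis unfolding good_def using s m bq by blast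
qed

lemma M0_closed: "closed M0"
  unfolding closed_sequential_limits
proof (intro allI impI, elim conjE)
  fix z l assume zM: "\<forall>k. z k \<in> M0" and zl: "z \<longlonglongrightarrow> l"
  have gr: "good (reP (z k)) \<and> good (imP (z k))" for k
  proof -
    obtain a c where g: "good a" "good c" and ze: "z k = a + scaleC \<i> c" using zM by (meson M0_E)
    show ?thesis unfolding ze re_im[OF good_sa[OF g(1)] good_sa[OF g(2)]] using g by simp
  qed
  have "good (reP l)" by (rule good_closed[OF _ reP_tendsto[OF zl]]) (use gr in blast)
  moreover have "good (imP l)" by (rule good_closed[OF _ imP_tendsto[OF zl]]) (use gr in blast)
  ultimately have "reP l + scaleC \<i> (imP l) \<in> M0" by (rule M0_I)
  thus "l \<in> M0" using re_im_decomp[of l] by simp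
qed

lemma faithful_part:
  assumes f: "faithful_map \<phi>"
  shows "\<exists>M. cstar_subalgebra M \<and> (\<forall>a\<in>M. \<forall>c\<in>M. a * c = c * a) \<and> definite_set \<phi> = {a\<in>M. cstar a = a}"
proof (intro exI conjI)
  have fc: "good a \<Longrightarrow> good c \<Longrightarrow> a * c = c * a" for a c using faithful_comm[OF f] by blast
  have gp: "good a \<Longrightarrow> good c \<Longrightarrow> good (a * c)" for a c using good_prodc fc by blast
  show "cstar_subalgebra M0"
    unfolding cstar_subalgebra_def
  proof (intro conjI ballI allI)
    show "0 \<in> M0" by (rule M0_zero)
    show "x + y \<in> M0" if "x \<in> M0" "y \<in> M0" for x y using M0_add that by blast
    show "x * y \<in> M0" if xy: "x \<in> M0" "y \<in> M0" for x y
    proof -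
      obtain a c where g: "good a" "good c" and xe: "x = a + scaleC \<i> c" using xy(1) by (rule M0_E)
      obtain a' c' where g': "good a'" "good c'" and ye: "y = a' + scaleC \<i> c'" using xy(2) by (rule M0_E)
      show ?thesis unfolding xe ye prod_M0form
        by (intro M0_I good_diff good_add gp g g')
    qed
    show "scaleC c x \<in> M0" if "x \<in> M0" for c x using M0_sC that by blast
    show "cstar x \<in> M0" if xM: "x \<in> M0" for x
    proof -
      obtain a c where g: "good a" "good c" and xe: "x = a + scaleC \<i> c" using xM by (rule M0_E)
      show ?thesis unfolding xe cs_M0form[OF good_sa[OF g(1)] good_sa[OF g(2)]]
        by (intro M0_I good_minus g)
    qed
    show "closed M0" by (rule M0_closed)
  qed
  show "\<forall>x\<in>M0. \<forall>y\<in>M0. x * y = y * x"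
  proof (intro ballI)
    fix x y assume xy: "x \<in> M0" "y \<in> M0"
    obtain a c where g: "good a" "good c" and xe: "x = a + scaleC \<i> c" using xy(1) by (rule M0_E)
    obtain a' c' where g': "good a'" "good c'" and ye: "y = a' + scaleC \<i> c'" using xy(2) by (rule M0_E)
    show "x * y = y * x" unfolding xe ye prod_M0form
      using fc[OF g(1) g'(1)] fc[OF g(2) g'(2)] fc[OF g(1) g'(2)] fc[OF g(2) g'(1)]
      by (simp add: add.commute)
  qed
  show "definite_set \<phi> = {a \<in> M0. cstar a = a}"
  proof
    show "definite_set \<phi> \<subseteq> {a \<in> M0. cstar a = a}" unfolding D_eq using good_M0 good_sa by blast
    show "{a \<in> M0. cstar a = a} \<subseteq> definite_set \<phi>"
    proof clarify
      fix x assume xM: "x \<in> M0" and xs: "cstar x = x"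
      obtain a c where g: "good a" "good c" and xe: "x = a + scaleC \<i> c" using xM by (rule M0_E)
      have "imP x = 0" unfolding imP_def using xs by simp
      hence "c = 0" using re_im(2)[OF good_sa[OF g(1)] good_sa[OF g(2)]] xe by simp
      hence "x = a" using xe by simp
      thus "x \<in> definite_set \<phi>" using g(1) D_eq by simp
    qed
  qed
qed

end


theorem theorem3p1:
  fixes \<phi> :: "'a::cstar_algebra \<Rightarrow> 'h::chilbert_space \<Rightarrow> 'h"
    and n :: nat and \<omega> :: "nat \<Rightarrow> 'a \<Rightarrow> complex" and b :: "nat \<Rightarrow> 'h \<Rightarrow> 'h"
    and e :: 'a
  assumes add: "\<And>x y. \<phi> (x + y) = (\<lambda>h. \<phi> x h + \<phi> y h)"
    and scal: "\<And>c x. \<phi> (scaleC c x) = (\<lambda>h. scaleC c (\<phi> x h))"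
    and pos: "\<And>a. cstar_positive a \<Longrightarrow> op_positive (\<phi> a)"
    and unital: "\<phi> 1 = id"
    and states: "\<And>i. i < n \<Longrightarrow> is_state (\<omega> i)"
    and bpos: "\<And>i. i < n \<Longrightarrow> op_positive (b i)"
    and form: "\<And>x. \<phi> x = (\<lambda>h. \<Sum>i<n. scaleC (\<omega> i x) (b i h))"
    and eproj: "cstar_projection e"
    and eD: "e \<in> definite_set \<phi>"
  shows "op_projection (\<phi> e) \<and> op_projection (\<phi> (1 - e)) \<and>
    (\<forall>x. \<phi> x = (\<lambda>h. \<phi> (e * x * e) h + \<phi> ((1 - e) * x * (1 - e)) h) \<and>
         (\<lambda>h. \<phi> (e * x * e) h + \<phi> ((1 - e) * x * (1 - e)) h)
           = (\<lambda>h. (\<phi> e \<circ> \<phi> x \<circ> \<phi> e) h + (\<phi> (1 - e) \<circ> \<phi> x \<circ> \<phi> (1 - e)) h)) \<and>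
    (\<exists>C. op_cstar_subalgebra C \<and> (\<forall>S\<in>C. \<forall>T\<in>C. S \<circ> T = T \<circ> S) \<and>
         \<phi> ` definite_set \<phi> = {T\<in>C. op_selfadjoint T} \<and>
         C \<subseteq> center (vN_generated (range \<phi>))) \<and>
    (faithful_map \<phi> \<longrightarrow>
       (\<exists>M. cstar_subalgebra M \<and> (\<forall>a\<in>M. \<forall>c\<in>M. a * c = c * a) \<and>
            definite_set \<phi> = {a\<in>M. cstar a = a}))"
proof -
  interpret stp \<phi> n \<omega> b using add scal unital states bpos form by unfold_locales
  have g: "good e" using eD D_eq by simp
  have ee: "e * e = e" and es: "cstar e = e" using eproj by (auto simp: cstar_projection_def)
  have gf: "good (1 - e)" by (rule good_diff[OF good_one g])
  have ff: "(1 - e) * (1 - e) = 1 - e"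
  proof -
    have "(1 - e) * (1 - e) = 1 - e - e + e * e" by (simp add: algebra_simps)
    thus ?thesis unfolding ee by simp
  qed
  have P1: "op_projection (\<phi> e)"
    unfolding op_projection_def using phi_op_sa[OF es] good_defin[OF g, unfolded ee, symmetric] by (rule conjI)
  have P2: "op_projection (\<phi> (1 - e))"
    unfolding op_projection_def using phi_op_sa[OF good_sa[OF gf]] good_defin[OF gf, unfolded ff, symmetric] by (rule conjI)
  have P3: "\<forall>x. \<phi> x = (\<lambda>h. \<phi> (e * x * e) h + \<phi> ((1 - e) * x * (1 - e)) h) \<and>
         (\<lambda>h. \<phi> (e * x * e) h + \<phi> ((1 - e) * x * (1 - e)) h)
           = (\<lambda>h. (\<phi> e \<circ> \<phi> x \<circ> \<phi> e) h + (\<phi> (1 - e) \<circ> \<phi> x \<circ> \<phi> (1 - e)) h)"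
  proof
    fix x
    show "\<phi> x = (\<lambda>h. \<phi> (e * x * e) h + \<phi> ((1 - e) * x * (1 - e)) h) \<and>
         (\<lambda>h. \<phi> (e * x * e) h + \<phi> ((1 - e) * x * (1 - e)) h)
           = (\<lambda>h. (\<phi> e \<circ> \<phi> x \<circ> \<phi> e) h + (\<phi> (1 - e) \<circ> \<phi> x \<circ> \<phi> (1 - e)) h)"
    proof
      show "\<phi> x = (\<lambda>h. \<phi> (e * x * e) h + \<phi> ((1 - e) * x * (1 - e)) h)"
        by (rule ext) (rule decomp[OF g ee])
      show "(\<lambda>h. \<phi> (e * x * e) h + \<phi> ((1 - e) * x * (1 - e)) h)
           = (\<lambda>h. (\<phi> e \<circ> \<phi> x \<circ> \<phi> e) h + (\<phi> (1 - e) \<circ> \<phi> x \<circ> \<phi> (1 - e)) h)"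
        by (rule ext) (simp only: comp_apply good_aXa[OF g] good_aXa[OF gf])
    qed
  qed
  have P4: "\<exists>C. op_cstar_subalgebra C \<and> (\<forall>S\<in>C. \<forall>T\<in>C. S \<circ> T = T \<circ> S) \<and>
         \<phi> ` definite_set \<phi> = {T\<in>C. op_selfadjoint T} \<and>
         C \<subseteq> center (vN_generated (range \<phi>))"
    using Cset_sub Cset_comm Cset_sa Cset_center by blast
  show ?thesis using P1 P2 P3 P4 faithful_part by blast
qed


end
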